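(* The derivation $\delta$ of the free algebra below induces a derivation (also denoted $\delta$) of $B$, and there is a $k$-algebra isomorphism $A_k\cong B[x_7;\delta]$.
   Context: Let $k$ be a field. $A_k=k\langle x_1,\dots,x_7\rangle/(r_1,\dots,r_7)$ with $r_1=[x_2,x_3]+[x_4,x_5]+[x_6,x_7]$, $r_2=[x_3,x_1]+[x_4,x_6]+[x_7,x_5]$, $r_3=[x_1,x_2]+[x_6,x_5]+[x_7,x_4]$, $r_4=[x_5,x_1]+[x_3,x_7]+[x_6,x_2]$, $r_5=[x_1,x_4]+[x_2,x_7]+[x_3,x_6]$, $r_6=[x_7,x_1]+[x_5,x_3]+[x_2,x_4]$, $r_7=[x_1,x_6]+[x_4,x_3]+[x_5,x_2]$. Let $B=k\langle x_1,\dots,x_6\rangle/([x_1,x_6]+[x_5,x_2]+[x_4,x_3])$. Let $\delta$ be the derivation of $k\langle x_1,\dots,x_6\rangle$ with $\delta(x_1)=[x_4,x_2]+[x_3,x_5]$, $\delta(x_2)=[x_1,x_4]+[x_3,x_6]$, $\delta(x_3)=[x_5,x_1]+[x_6,x_2]$, $\delta(x_4)=[x_2,x_1]+[x_5,x_6]$, $\delta(x_5)=[x_1,x_3]+[x_6,x_4]$, $\delta(x_6)=[x_2,x_3]+[x_4,x_5]$. For a derivation $\delta$ of an algebra $B$, the Ore extension $B[X;\delta]$ is the free left $B$-module $\bigoplus_{i\ge0}BX^i$ with the associative multiplication determined by $X^iX^j=X^{i+j}$ and $Xb=bX+\delta(b)$ for $b\in B$. *)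

theory Defs
  imports "HOL-Algebra.QuotRing" "HOL-Algebra.Ideal" "HOL-Algebra.FiniteProduct"
begin

text \<open>Elements are finitely supported k-valued functions on words (lists of letters);
  the letter i stands for the generator x_i, and only letters 1..n may occur.\<close>

definition fa_mult :: "(nat list \<Rightarrow> 'k::field) \<Rightarrow> (nat list \<Rightarrow> 'k) \<Rightarrow> (nat list \<Rightarrow> 'k)" where
  "fa_mult p q = (\<lambda>w. \<Sum>i\<le>length w. p (take i w) * q (drop i w))"

definition free_alg :: "nat \<Rightarrow> (nat list \<Rightarrow> 'k::field) ring" where
  "free_alg n = \<lparr> carrier = {p. finite {w. p w \<noteq> 0} \<and> (\<forall>w. p w \<noteq> 0 \<longrightarrow> set w \<subseteq> {1..n})},
                  mult = fa_mult,
                  one = (\<lambda>w. if w = [] then 1 else 0),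
                  zero = (\<lambda>w. 0),
                  add = (\<lambda>p q w. p w + q w) \<rparr>"

definition gen :: "nat \<Rightarrow> (nat list \<Rightarrow> 'k::field)" where
  "gen i = (\<lambda>w. if w = [i] then 1 else 0)"

definition mon :: "nat list \<Rightarrow> (nat list \<Rightarrow> 'k::field)" where
  "mon u = (\<lambda>w. if w = u then 1 else 0)"

definition fa_scalar :: "'k::field \<Rightarrow> (nat list \<Rightarrow> 'k)" where
  "fa_scalar c = (\<lambda>w. if w = [] then c else 0)"

definition comm :: "(nat list \<Rightarrow> 'k::field) \<Rightarrow> (nat list \<Rightarrow> 'k) \<Rightarrow> (nat list \<Rightarrow> 'k)" where
  "comm a b = (\<lambda>w. fa_mult a b w - fa_mult b a w)"

text \<open>The (unique) derivation of the free algebra with prescribed values D i on the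
  generators x_i: on a word x_{w_1}...x_{w_m} it is sum_i x_{w_1}..x_{w_{i-1}} D(w_i) x_{w_{i+1}}..x_{w_m},
  extended k-linearly.\<close>
definition der_word :: "(nat \<Rightarrow> (nat list \<Rightarrow> 'k::field)) \<Rightarrow> nat list \<Rightarrow> (nat list \<Rightarrow> 'k)" where
  "der_word D u = (\<lambda>w. \<Sum>i<length u.
      fa_mult (fa_mult (mon (take i u)) (D (u ! i))) (mon (drop (Suc i) u)) w)"

definition der_ext :: "(nat \<Rightarrow> (nat list \<Rightarrow> 'k::field)) \<Rightarrow> (nat list \<Rightarrow> 'k) \<Rightarrow> (nat list \<Rightarrow> 'k)" where
  "der_ext D p = (\<lambda>w. \<Sum>u\<in>{u. p u \<noteq> 0}. p u * der_word D u w)"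

definition relA :: "nat \<Rightarrow> (nat list \<Rightarrow> 'k::field)" where
  "relA j = (if j = 1 then (\<lambda>w. comm (gen 2) (gen 3) w + comm (gen 4) (gen 5) w + comm (gen 6) (gen 7) w)
        else if j = 2 then (\<lambda>w. comm (gen 3) (gen 1) w + comm (gen 4) (gen 6) w + comm (gen 7) (gen 5) w)
        else if j = 3 then (\<lambda>w. comm (gen 1) (gen 2) w + comm (gen 6) (gen 5) w + comm (gen 7) (gen 4) w)
        else if j = 4 then (\<lambda>w. comm (gen 5) (gen 1) w + comm (gen 3) (gen 7) w + comm (gen 6) (gen 2) w)
        else if j = 5 then (\<lambda>w. comm (gen 1) (gen 4) w + comm (gen 2) (gen 7) w + comm (gen 3) (gen 6) w)
        else if j = 6 then (\<lambda>w. comm (gen 7) (gen 1) w + comm (gen 5) (gen 3) w + comm (gen 2) (gen 4) w)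
        else (\<lambda>w. comm (gen 1) (gen 6) w + comm (gen 4) (gen 3) w + comm (gen 5) (gen 2) w))"

definition idealA :: "(nat list \<Rightarrow> 'k::field) set" where
  "idealA = genideal (free_alg 7) (relA ` {1..7})"

definition A_alg :: "((nat list \<Rightarrow> 'k::field) set) ring" where
  "A_alg = free_alg 7 Quot idealA"

definition relB :: "nat list \<Rightarrow> 'k::field" where
  "relB = (\<lambda>w. comm (gen 1) (gen 6) w + comm (gen 5) (gen 2) w + comm (gen 4) (gen 3) w)"

definition idealB :: "(nat list \<Rightarrow> 'k::field) set" where
  "idealB = genideal (free_alg 6) {relB}"

definition B_alg :: "((nat list \<Rightarrow> 'k::field) set) ring" where
  "B_alg = free_alg 6 Quot idealB"

definition delta_gen :: "nat \<Rightarrow> (nat list \<Rightarrow> 'k::field)" where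
  "delta_gen i = (if i = 1 then (\<lambda>w. comm (gen 4) (gen 2) w + comm (gen 3) (gen 5) w)
        else if i = 2 then (\<lambda>w. comm (gen 1) (gen 4) w + comm (gen 3) (gen 6) w)
        else if i = 3 then (\<lambda>w. comm (gen 5) (gen 1) w + comm (gen 6) (gen 2) w)
        else if i = 4 then (\<lambda>w. comm (gen 2) (gen 1) w + comm (gen 5) (gen 6) w)
        else if i = 5 then (\<lambda>w. comm (gen 1) (gen 3) w + comm (gen 6) (gen 4) w)
        else if i = 6 then (\<lambda>w. comm (gen 2) (gen 3) w + comm (gen 4) (gen 5) w)
        else (\<lambda>w. 0))"

definition delta :: "(nat list \<Rightarrow> 'k::field) \<Rightarrow> (nat list \<Rightarrow> 'k)" where
  "delta = der_ext delta_gen"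

definition induced_map :: "('a, 'b) ring_scheme \<Rightarrow> 'a set \<Rightarrow> ('a \<Rightarrow> 'a) \<Rightarrow> 'a set \<Rightarrow> 'a set" where
  "induced_map R I d = (\<lambda>C. I +>\<^bsub>R\<^esub> d (SOME p. p \<in> C))"

definition delta_B :: "(nat list \<Rightarrow> 'k::field) set \<Rightarrow> (nat list \<Rightarrow> 'k) set" where
  "delta_B = induced_map (free_alg 6) idealB delta"

definition A_emb :: "'k::field \<Rightarrow> (nat list \<Rightarrow> 'k) set" where
  "A_emb c = idealA +>\<^bsub>free_alg 7\<^esub> fa_scalar c"

definition B_emb :: "'k::field \<Rightarrow> (nat list \<Rightarrow> 'k) set" where
  "B_emb c = idealB +>\<^bsub>free_alg 6\<^esub> fa_scalar c"

definition is_k_derivation :: "('a, 'b) ring_scheme \<Rightarrow> ('k \<Rightarrow> 'a) \<Rightarrow> ('a \<Rightarrow> 'a) \<Rightarrow> bool" where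
  "is_k_derivation R e d \<longleftrightarrow>
     d \<in> carrier R \<rightarrow> carrier R \<and>
     (\<forall>x\<in>carrier R. \<forall>y\<in>carrier R. d (x \<oplus>\<^bsub>R\<^esub> y) = d x \<oplus>\<^bsub>R\<^esub> d y) \<and>
     (\<forall>x\<in>carrier R. \<forall>y\<in>carrier R. d (x \<otimes>\<^bsub>R\<^esub> y) = (d x \<otimes>\<^bsub>R\<^esub> y) \<oplus>\<^bsub>R\<^esub> (x \<otimes>\<^bsub>R\<^esub> d y)) \<and>
     (\<forall>c. \<forall>x\<in>carrier R. d (e c \<otimes>\<^bsub>R\<^esub> x) = e c \<otimes>\<^bsub>R\<^esub> d x)"

text \<open>Ore extension R[X; d]: an element sum_i f(i) X^i is the finitely supported coefficient
  function f.  Multiplication is determined by X^i X^j = X^(i+j) and X b = b X + d(b), i.e.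
  (b X^i)(c X^j) = sum_{l<=i} binom(i,l) b d^(i-l)(c) X^(l+j).\<close>
definition ore_ext :: "('a, 'b) ring_scheme \<Rightarrow> ('a \<Rightarrow> 'a) \<Rightarrow> (nat \<Rightarrow> 'a) ring" where
  "ore_ext R d = \<lparr> carrier = {f. (\<forall>i. f i \<in> carrier R) \<and> finite {i. f i \<noteq> \<zero>\<^bsub>R\<^esub>}},
     mult = (\<lambda>f g n. \<Oplus>\<^bsub>R\<^esub> i\<in>{i. f i \<noteq> \<zero>\<^bsub>R\<^esub>}. \<Oplus>\<^bsub>R\<^esub> j\<in>{j. g j \<noteq> \<zero>\<^bsub>R\<^esub>}. \<Oplus>\<^bsub>R\<^esub> l\<in>{..i}.
               (if l + j = n then f i \<otimes>\<^bsub>R\<^esub> add_pow R (i choose l) ((d ^^ (i - l)) (g j)) else \<zero>\<^bsub>R\<^esub>)),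
     one = (\<lambda>n. if n = 0 then \<one>\<^bsub>R\<^esub> else \<zero>\<^bsub>R\<^esub>),
     zero = (\<lambda>n. \<zero>\<^bsub>R\<^esub>),
     add = (\<lambda>f g n. f n \<oplus>\<^bsub>R\<^esub> g n) \<rparr>"

definition ore_emb :: "('a, 'b) ring_scheme \<Rightarrow> ('k \<Rightarrow> 'a) \<Rightarrow> 'k \<Rightarrow> (nat \<Rightarrow> 'a)" where
  "ore_emb R e c = (\<lambda>n. if n = 0 then e c else \<zero>\<^bsub>R\<^esub>)"

end

theory Submission
  imports Defs
begin


lemma fa_mult_assoc: "fa_mult (fa_mult p q) r = fa_mult p (fa_mult (q::nat list \<Rightarrow> 'k::field) r)"
proof (rule ext)
  fix w :: "nat list"
  define n where "n = length w"
  define g where "g = (\<lambda>j m. p (take j w) * q (take m (drop j w)) * r (drop (j+m) w))"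
  have L: "fa_mult (fa_mult p q) r w = (\<Sum>i\<le>n. \<Sum>j\<le>i. g j (i - j))"
    unfolding fa_mult_def n_def g_def
    by (auto simp: sum_distrib_right min_absorb2 take_drop intro!: sum.cong)
  have R: "fa_mult p (fa_mult q r) w = (\<Sum>j\<le>n. \<Sum>m\<le>n-j. g j m)"
    unfolding fa_mult_def n_def g_def
    by (auto simp: sum_distrib_left mult.assoc add.commute intro!: sum.cong)
  have "(\<Sum>i\<le>n. \<Sum>j\<le>i. g j (i - j)) = (\<Sum>(j,m)\<in>{(j,m). j+m \<le> n}. g j m)"
    by (rule sum.triangle_reindex_eq[symmetric])
  also have "{(j,m). j+m \<le> n} = Sigma {..n} (\<lambda>j. {..n-j})" by auto
  also have "(\<Sum>(j,m)\<in>Sigma {..n} (\<lambda>j. {..n-j}). g j m) = (\<Sum>j\<le>n. \<Sum>m\<le>n-j. g j m)"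
    by (rule sum.Sigma[symmetric]) auto
  finally show "fa_mult (fa_mult p q) r w = fa_mult p (fa_mult q r) w" using L R by simp
qed


lemma fa_mult_addL: "fa_mult (\<lambda>w. p w + q w) r = (\<lambda>w. fa_mult p r w + fa_mult (q::nat list \<Rightarrow> 'k::field) r w)"
  unfolding fa_mult_def by (auto simp: sum.distrib ring_distribs)

lemma fa_mult_addR: "fa_mult r (\<lambda>w. p w + q w) = (\<lambda>w. fa_mult r p w + fa_mult (r::nat list \<Rightarrow> 'k::field) q w)"
  unfolding fa_mult_def by (auto simp: sum.distrib ring_distribs)

lemma fa_mult_oneL: "fa_mult (\<lambda>w. if w = [] then 1 else 0) p = (p::nat list \<Rightarrow> 'k::field)"
proof (rule ext)
  fix w :: "nat list"
  have "fa_mult (\<lambda>w. if w = [] then 1 else 0) p w = (\<Sum>i\<le>length w. if i = 0 then p w else 0)"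
    unfolding fa_mult_def by (rule sum.cong) auto
  also have "\<dots> = p w" by (simp add: sum.delta)
  finally show "fa_mult (\<lambda>w. if w = [] then 1 else 0) p w = p w" .
qed

lemma fa_mult_oneR: "fa_mult p (\<lambda>w. if w = [] then 1 else 0) = (p::nat list \<Rightarrow> 'k::field)"
proof (rule ext)
  fix w :: "nat list"
  have "fa_mult p (\<lambda>w. if w = [] then 1 else 0) w = (\<Sum>i\<le>length w. if i = length w then p w else 0)"
    unfolding fa_mult_def by (rule sum.cong) auto
  also have "\<dots> = p w" by (simp add: sum.delta)
  finally show "fa_mult p (\<lambda>w. if w = [] then 1 else 0) w = p w" .
qed

lemma fa_mult_nz: "fa_mult p q w \<noteq> 0 \<Longrightarrow> \<exists>u v. w = u @ v \<and> p u \<noteq> 0 \<and> (q::nat list \<Rightarrow> 'k::field) v \<noteq> 0"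
  unfolding fa_mult_def
  by (metis (no_types, lifting) append_take_drop_id mult_not_zero sum.neutral)

lemma fa_mult_supp: "{w. fa_mult p q w \<noteq> 0} \<subseteq> (\<lambda>(u,v). u @ v) ` ({u. p u \<noteq> 0} \<times> {v. (q::nat list \<Rightarrow> 'k::field) v \<noteq> 0})"
  using fa_mult_nz by fastforce

lemma carrier_fa: "p \<in> carrier (free_alg n) \<longleftrightarrow> finite {w. p w \<noteq> 0} \<and> (\<forall>w. p w \<noteq> 0 \<longrightarrow> set w \<subseteq> {1..n})"
  by (simp add: free_alg_def)

lemma fa_simps:
  "mult (free_alg n) = fa_mult"
  "one (free_alg n) = (\<lambda>w. if w = [] then 1 else 0)"
  "zero (free_alg n) = (\<lambda>w. 0)"
  "add (free_alg n) = (\<lambda>p q w. p w + q w)"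
  by (simp_all add: free_alg_def)

lemma fa_mult_closed:
  assumes "p \<in> carrier (free_alg n)" "q \<in> carrier (free_alg n)"
  shows "fa_mult p q \<in> carrier (free_alg n :: (nat list \<Rightarrow> 'k::field) ring)"
proof -
  have "finite {w. fa_mult p q w \<noteq> 0}"
    using assms by (auto simp: carrier_fa intro: finite_subset[OF fa_mult_supp])
  moreover have "\<forall>w. fa_mult p q w \<noteq> 0 \<longrightarrow> set w \<subseteq> {1..n}"
    using assms fa_mult_nz unfolding carrier_fa by fastforce
  ultimately show ?thesis by (simp add: carrier_fa)
qed

lemma fa_add_closed:
  assumes "p \<in> carrier (free_alg n)" "q \<in> carrier (free_alg n)"
  shows "(\<lambda>w. p w + q w) \<in> carrier (free_alg n :: (nat list \<Rightarrow> 'k::field) ring)"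
proof -
  have "{w. p w + q w \<noteq> 0} \<subseteq> {w. p w \<noteq> 0} \<union> {w. q w \<noteq> 0}" by auto
  then show ?thesis using assms unfolding carrier_fa
    by (metis (mono_tags, lifting) add.right_neutral add_0 finite_Un finite_subset)
qed

lemma ring_fa: "ring (free_alg n :: (nat list \<Rightarrow> 'k::field) ring)"
proof (rule ringI)
  show "abelian_group (free_alg n :: (nat list \<Rightarrow> 'k::field) ring)"
  proof (rule abelian_groupI, goal_cases)
    case (1 x y) then show ?case by (simp add: fa_simps fa_add_closed)
  next
    case 2 then show ?case by (simp add: fa_simps carrier_fa)
  next
    case (3 x y z) then show ?case by (simp add: fa_simps add.assoc)
  next
    case (4 x y) then show ?case by (simp add: fa_simps add.commute)
  next
    case (5 x) then show ?case by (simp add: fa_simps)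
  next
    case (6 x)
    then show ?case by (intro bexI[of _ "\<lambda>w. - x w"]) (auto simp: fa_simps carrier_fa)
  qed
  show "monoid (free_alg n :: (nat list \<Rightarrow> 'k::field) ring)"
  proof (rule monoidI)
    show "\<one>\<^bsub>free_alg n\<^esub> \<in> carrier (free_alg n :: (nat list \<Rightarrow> 'k::field) ring)"
      by (simp add: fa_simps carrier_fa)
  qed (auto simp: fa_simps fa_mult_closed fa_mult_assoc fa_mult_oneL fa_mult_oneR)
qed (simp_all add: fa_simps fa_mult_addL fa_mult_addR)


definition lext :: "(nat list \<Rightarrow> 'x \<Rightarrow> 'k::field) \<Rightarrow> (nat list \<Rightarrow> 'k) \<Rightarrow> 'x \<Rightarrow> 'k" where
  "lext F p = (\<lambda>x. \<Sum>u\<in>{u. p u \<noteq> 0}. p u * F u x)"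

abbreviation fsupp :: "(nat list \<Rightarrow> 'k::field) \<Rightarrow> bool" where
  "fsupp p \<equiv> finite {w. p w \<noteq> 0}"

lemma der_ext_lext: "der_ext D = lext (der_word D)"
  unfolding der_ext_def lext_def by (rule ext) simp

lemma lext_supp: "finite S \<Longrightarrow> {u. p u \<noteq> 0} \<subseteq> S \<Longrightarrow> lext F p x = (\<Sum>u\<in>S. p u * F u x)"
  unfolding lext_def by (rule sum.mono_neutral_left) auto

lemma fsupp_add: "fsupp p \<Longrightarrow> fsupp q \<Longrightarrow> fsupp (\<lambda>w. p w + q w)"
  by (rule finite_subset[of _ "{w. p w \<noteq> 0} \<union> {w. q w \<noteq> 0}"]) auto

lemma fsupp_scale: "fsupp p \<Longrightarrow> fsupp (\<lambda>w. c * p w)"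
  by (rule finite_subset[of _ "{w. p w \<noteq> 0}"]) auto

lemma fsupp_sum: "finite A \<Longrightarrow> (\<forall>i\<in>A. fsupp (f i)) \<Longrightarrow> fsupp (\<lambda>w. \<Sum>i\<in>A. c i * f i w)"
proof (induction A rule: finite_induct)
  case empty then show ?case by simp
next
  case (insert a A)
  then show ?case using fsupp_add[OF fsupp_scale[of "f a" "c a"], of "\<lambda>w. \<Sum>i\<in>A. c i * f i w"]
    by simp
qed

lemma lext_add: "fsupp p \<Longrightarrow> fsupp q \<Longrightarrow> lext F (\<lambda>w. p w + q w) x = lext F p x + lext F q x"
proof -
  assume p: "fsupp p" and q: "fsupp q"
  let ?S = "{w. p w \<noteq> 0} \<union> {w. q w \<noteq> 0}"
  have "lext F (\<lambda>w. p w + q w) x = (\<Sum>u\<in>?S. (p u + q u) * F u x)"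
    using p q by (intro lext_supp) auto
  also have "\<dots> = (\<Sum>u\<in>?S. p u * F u x) + (\<Sum>u\<in>?S. q u * F u x)"
    by (simp add: ring_distribs sum.distrib)
  also have "\<dots> = lext F p x + lext F q x"
    using p q lext_supp[of ?S p F x] lext_supp[of ?S q F x] by auto
  finally show ?thesis .
qed

lemma lext_scale: "lext F (\<lambda>w. c * p w) x = c * lext F p x"
proof (cases "c = 0")
  case True then show ?thesis by (simp add: lext_def)
next
  case False
  then have "{u. c * p u \<noteq> 0} = {u. p u \<noteq> 0}" by auto
  then show ?thesis unfolding lext_def by (simp add: sum_distrib_left mult.assoc)
qed

lemma lext_sum: "finite A \<Longrightarrow> (\<forall>i\<in>A. fsupp (f i)) \<Longrightarrow>
   lext F (\<lambda>w. \<Sum>i\<in>A. c i * f i w) x = (\<Sum>i\<in>A. c i * lext F (f i) x)"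
proof (induction A rule: finite_induct)
  case empty then show ?case by (simp add: lext_def)
next
  case (insert a A)
  have "lext F (\<lambda>w. \<Sum>i\<in>insert a A. c i * f i w) x = lext F (\<lambda>w. c a * f a w + (\<Sum>i\<in>A. c i * f i w)) x"
    using insert by simp
  also have "\<dots> = lext F (\<lambda>w. c a * f a w) x + lext F (\<lambda>w. \<Sum>i\<in>A. c i * f i w) x"
    using insert by (intro lext_add fsupp_scale fsupp_sum) auto
  finally show ?case using insert by (simp add: lext_scale)
qed

lemma lext_zero: "lext F (\<lambda>w. 0) x = 0"
  by (simp add: lext_def)

definition fsupp_set where "fsupp_set p = {w. p w \<noteq> 0}"

lemma sum_fa_mult:
  fixes p q :: "nat list \<Rightarrow> 'k::field"
  assumes "finite Sp" "finite Sq" "{u. p u \<noteq> 0} \<subseteq> Sp" "{v. q v \<noteq> 0} \<subseteq> Sq"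
  shows "(\<Sum>w\<in>{w. fa_mult p q w \<noteq> 0}. fa_mult p q w * G w) = (\<Sum>u\<in>Sp. \<Sum>v\<in>Sq. p u * q v * G (u @ v))"
proof -
  define W where "W = (\<lambda>(u,v). u @ v) ` (Sp \<times> Sq)"
  have fW: "finite W" using assms unfolding W_def by auto
  have sW: "{w. fa_mult p q w \<noteq> 0} \<subseteq> W"
    using fa_mult_nz[of p q] assms unfolding W_def by fastforce
  define F where "F = (\<lambda>(w::nat list,i). p (take i w) * q (drop i w) * G w)"
  have "(\<Sum>w\<in>{w. fa_mult p q w \<noteq> 0}. fa_mult p q w * G w) = (\<Sum>w\<in>W. fa_mult p q w * G w)"
    using fW sW by (intro sum.mono_neutral_left) auto
  also have "\<dots> = (\<Sum>w\<in>W. \<Sum>i\<le>length w. F (w,i))"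
    unfolding fa_mult_def F_def by (simp add: sum_distrib_right)
  also have "\<dots> = (\<Sum>x\<in>Sigma W (\<lambda>w. {..length w}). F x)"
    using fW by (subst sum.Sigma) auto
  also have "\<dots> = (\<Sum>x\<in>(\<lambda>(u,v). (u@v, length u)) ` (Sp \<times> Sq). F x)"
  proof (rule sum.mono_neutral_right)
    show "finite (Sigma W (\<lambda>w. {..length w}))" using fW by auto
    show "(\<lambda>(u,v). (u@v, length u)) ` (Sp \<times> Sq) \<subseteq> Sigma W (\<lambda>w. {..length w})"
      unfolding W_def by auto
    show "\<forall>x\<in>Sigma W (\<lambda>w. {..length w}) - (\<lambda>(u,v). (u@v, length u)) ` (Sp \<times> Sq). F x = 0"
    proof
      fix x assume x: "x \<in> Sigma W (\<lambda>w. {..length w}) - (\<lambda>(u,v). (u@v, length u)) ` (Sp \<times> Sq)"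
      obtain w i where wi: "x = (w,i)" by force
      show "F x = 0"
      proof (rule ccontr)
        assume "F x \<noteq> 0"
        then have "p (take i w) \<noteq> 0" "q (drop i w) \<noteq> 0" unfolding F_def wi by auto
        then have "take i w \<in> Sp" "drop i w \<in> Sq" using assms by auto
        moreover have "i \<le> length w" using x wi by auto
        ultimately have "x \<in> (\<lambda>(u,v). (u@v, length u)) ` (Sp \<times> Sq)"
          unfolding wi by (intro image_eqI[of _ _ "(take i w, drop i w)"]) auto
        then show False using x by auto
      qed
    qed
  qed
  also have "\<dots> = (\<Sum>x\<in>Sp \<times> Sq. F (case x of (u,v) \<Rightarrow> (u@v, length u)))"
  proof -
    have inj: "inj_on (\<lambda>(u::nat list,v::nat list). (u@v, length u)) (Sp \<times> Sq)"
      by (auto simp: inj_on_def)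
    show ?thesis using sum.reindex[OF inj, of F] by (simp add: o_def)
  qed
  also have "\<dots> = (\<Sum>u\<in>Sp. \<Sum>v\<in>Sq. p u * q v * G (u @ v))"
    unfolding F_def by (simp add: sum.cartesian_product split_def)
  finally show ?thesis .
qed

lemma lext_mult:
  fixes p q :: "nat list \<Rightarrow> 'k::field"
  assumes "finite Sp" "finite Sq" "{u. p u \<noteq> 0} \<subseteq> Sp" "{v. q v \<noteq> 0} \<subseteq> Sq"
  shows "lext F (fa_mult p q) x = (\<Sum>u\<in>Sp. \<Sum>v\<in>Sq. p u * q v * F (u @ v) x)"
  unfolding lext_def by (rule sum_fa_mult[OF assms])

lemma mon_mult: "fa_mult (mon u) (mon v) = (mon (u @ v) :: nat list \<Rightarrow> 'k::field)"
proof (rule ext)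
  fix w :: "nat list"
  have "fa_mult (mon u) (mon v) w = (\<Sum>i\<le>length w. if i = length u \<and> w = u @ v then (1::'k) else 0)"
  proof -
    have "\<And>x. x \<le> length w \<Longrightarrow> (take x w = u \<and> drop x w = v) \<longleftrightarrow> (x = length u \<and> w = u @ v)"
      by (metis append_eq_conv_conj append_take_drop_id length_take min_absorb2)
    then show ?thesis unfolding fa_mult_def mon_def
      by (intro sum.cong) auto
  qed
  also have "\<dots> = mon (u @ v) w"
    by (auto simp: mon_def sum.delta)
  finally show "fa_mult (mon u) (mon v) w = (mon (u @ v) w :: 'k)" .
qed

lemma supp_mon: "{w. (mon u :: nat list \<Rightarrow> 'k::field) w \<noteq> 0} = {u}"
  by (auto simp: mon_def)

lemma lext_mon: "lext F (mon u) x = F u x"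
  by (simp add: lext_def supp_mon) (simp add: mon_def)

lemma lext_repr: "fsupp p \<Longrightarrow> lext mon p w = (p w :: 'k::field)"
  unfolding lext_def mon_def
  by (simp add: if_distrib sum.delta' cong: if_cong)

lemma fa_mult_sumL: "fa_mult (\<lambda>w. \<Sum>i\<in>A. c i * f i w) r = (\<lambda>w. \<Sum>i\<in>A. c i * fa_mult (f i) r w)"
  unfolding fa_mult_def by (rule ext) (simp add: sum_distrib_left sum_distrib_right mult.assoc sum.swap[of _ A])

lemma fa_mult_sumR: "fa_mult r (\<lambda>w. \<Sum>i\<in>A. c i * f i w) = (\<lambda>w. \<Sum>i\<in>A. c i * fa_mult r (f i) w)"
  unfolding fa_mult_def by (rule ext) (simp add: sum_distrib_left sum_distrib_right mult.assoc mult.left_commute sum.swap[of _ A])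

lemma fa_mult_sumL': "fa_mult (\<lambda>w. \<Sum>i\<in>A. f i w) r = (\<lambda>w. \<Sum>i\<in>A. fa_mult (f i) r w)"
  using fa_mult_sumL[of "\<lambda>_. 1" f A r] by simp

lemma fa_mult_sumR': "fa_mult r (\<lambda>w. \<Sum>i\<in>A. f i w) = (\<lambda>w. \<Sum>i\<in>A. fa_mult r (f i) w)"
  using fa_mult_sumR[of r "\<lambda>_. 1" f A] by simp

lemma fa_mult_scaleL: "fa_mult (\<lambda>w. c * f w) r = (\<lambda>w. c * fa_mult f r w)"
  unfolding fa_mult_def by (rule ext) (simp add: sum_distrib_left mult.assoc)

lemma fa_mult_scaleR: "fa_mult r (\<lambda>w. c * f w) = (\<lambda>w. c * fa_mult r f w)"
  unfolding fa_mult_def by (rule ext) (simp add: sum_distrib_left mult.left_commute)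

lemma fa_mult_diffL: "fa_mult (\<lambda>w. p w - q w) r = (\<lambda>w. fa_mult p r w - fa_mult q r w)"
  unfolding fa_mult_def by (rule ext) (simp add: sum_subtractf left_diff_distrib)

lemma fa_mult_diffR: "fa_mult r (\<lambda>w. p w - q w) = (\<lambda>w. fa_mult r p w - fa_mult r q w)"
  unfolding fa_mult_def by (rule ext) (simp add: sum_subtractf right_diff_distrib)

lemma fa_mult_zeroL: "fa_mult (\<lambda>w. 0) r = (\<lambda>w. 0)"
  unfolding fa_mult_def by simp

lemma fa_mult_zeroR: "fa_mult r (\<lambda>w. 0) = (\<lambda>w. 0)"
  unfolding fa_mult_def by simp


lemma gen_mon: "gen i = mon [i]"
  unfolding gen_def mon_def by simp

lemma mon_Nil: "mon [] = (\<lambda>w. if w = [] then 1 else 0)"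
  unfolding mon_def by simp

lemma mon_carrier: "set u \<subseteq> {1..n} \<Longrightarrow> (mon u :: nat list \<Rightarrow> 'k::field) \<in> carrier (free_alg n)"
  by (simp add: carrier_fa supp_mon) (simp add: mon_def)

lemma gen_carrier: "i \<in> {1..n} \<Longrightarrow> (gen i :: nat list \<Rightarrow> 'k::field) \<in> carrier (free_alg n)"
  by (simp add: gen_mon mon_carrier)

lemma carrier_scale: "p \<in> carrier (free_alg n) \<Longrightarrow> (\<lambda>w. c * p w) \<in> carrier (free_alg n :: (nat list \<Rightarrow> 'k::field) ring)"
  unfolding carrier_fa by (auto intro: fsupp_scale)

lemma carrier_zero: "(\<lambda>w. 0) \<in> carrier (free_alg n :: (nat list \<Rightarrow> 'k::field) ring)"
  unfolding carrier_fa by simp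

lemma carrier_sum: "finite A \<Longrightarrow> (\<forall>i\<in>A. f i \<in> carrier (free_alg n)) \<Longrightarrow>
   (\<lambda>w. \<Sum>i\<in>A. c i * f i w) \<in> carrier (free_alg n :: (nat list \<Rightarrow> 'k::field) ring)"
proof (induction A rule: finite_induct)
  case empty then show ?case by (simp add: carrier_zero)
next
  case (insert a A)
  then show ?case using fa_add_closed[OF carrier_scale[of "f a" n "c a"], of "\<lambda>w. \<Sum>i\<in>A. c i * f i w"]
    by simp
qed

lemma carrier_sum': "finite A \<Longrightarrow> (\<forall>i\<in>A. f i \<in> carrier (free_alg n)) \<Longrightarrow>
   (\<lambda>w. \<Sum>i\<in>A. f i w) \<in> carrier (free_alg n :: (nat list \<Rightarrow> 'k::field) ring)"
  using carrier_sum[of A f n "\<lambda>_. 1"] by simp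

lemma carrier_diff: "p \<in> carrier (free_alg n) \<Longrightarrow> q \<in> carrier (free_alg n) \<Longrightarrow>
   (\<lambda>w. p w - q w) \<in> carrier (free_alg n :: (nat list \<Rightarrow> 'k::field) ring)"
  using fa_add_closed[OF _ carrier_scale[of q n "-1"], of p] by simp

lemma carrier_comm: "p \<in> carrier (free_alg n) \<Longrightarrow> q \<in> carrier (free_alg n) \<Longrightarrow>
   comm p q \<in> carrier (free_alg n :: (nat list \<Rightarrow> 'k::field) ring)"
  unfolding comm_def by (intro carrier_diff fa_mult_closed)

lemma carrier_mono: "m \<le> n \<Longrightarrow> p \<in> carrier (free_alg m) \<Longrightarrow> p \<in> carrier (free_alg n :: (nat list \<Rightarrow> 'k::field) ring)"
  unfolding carrier_fa by fastforce

lemma carrier_fsupp: "p \<in> carrier (free_alg n) \<Longrightarrow> fsupp p"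
  unfolding carrier_fa by simp

lemma sum_lessThan_add: "(\<Sum>i<m+(n::nat). f i) = (\<Sum>i<m. f i) + (\<Sum>i<n. (f (m+i) :: 'a::comm_monoid_add))"
  by (induction n) (simp_all add: add.assoc)

lemma der_word_Nil: "der_word D [] = (\<lambda>w. 0)"
  unfolding der_word_def by simp

lemma der_word_append:
  "der_word D (u @ v) = (\<lambda>w. fa_mult (der_word D u) (mon v) w + fa_mult (mon u) (der_word D v) (w::nat list) :: 'k::field)"
proof (rule ext)
  fix w
  define T where "T = (\<lambda>u i. fa_mult (fa_mult (mon (take i u)) (D (u ! i))) (mon (drop (Suc i) u)))"
  have dw: "\<And>u. der_word D u = (\<lambda>w. \<Sum>i<length u. T u i w)"
    unfolding der_word_def T_def by simp
  have 1: "T (u @ v) i = fa_mult (T u i) (mon v)" if "i < length u" for i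
    using that unfolding T_def by (simp add: fa_mult_assoc mon_mult nth_append)
  have 2: "T (u @ v) (length u + j) = fa_mult (mon u) (T v j)" for j
    unfolding T_def
    by (simp add: fa_mult_assoc[symmetric] mon_mult[symmetric] nth_append)
  have "der_word D (u @ v) w = (\<Sum>i<length u. T (u@v) i w) + (\<Sum>j<length v. T (u@v) (length u + j) w)"
    unfolding dw by (simp add: sum_lessThan_add)
  also have "\<dots> = (\<Sum>i<length u. fa_mult (T u i) (mon v) w) + (\<Sum>j<length v. fa_mult (mon u) (T v j) w)"
    using 1 2 by simp
  also have "\<dots> = fa_mult (der_word D u) (mon v) w + fa_mult (mon u) (der_word D v) w"
    unfolding dw fa_mult_sumL' fa_mult_sumR' by simp
  finally show "der_word D (u @ v) w = fa_mult (der_word D u) (mon v) w + fa_mult (mon u) (der_word D v) w" .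
qed

lemma der_word_single: "der_word D [a] = (D a :: nat list \<Rightarrow> 'k::field)"
  unfolding der_word_def by (simp add: mon_Nil fa_mult_oneL fa_mult_oneR)

lemma der_word_Cons: "der_word D (a # u) = (\<lambda>w. fa_mult (D a) (mon u) w + fa_mult (gen a) (der_word D u) w :: 'k::field)"
  using der_word_append[of D "[a]" u] by (simp add: der_word_single gen_mon)

lemma der_word_closed: "set u \<subseteq> {1..n} \<Longrightarrow> (\<forall>i\<in>{1..n}. D i \<in> carrier (free_alg n)) \<Longrightarrow>
  (der_word D u :: nat list \<Rightarrow> 'k::field) \<in> carrier (free_alg n)"
proof (induction u)
  case Nil then show ?case by (simp add: der_word_Nil carrier_zero)
next
  case (Cons a u)
  then show ?case unfolding der_word_Cons
    by (intro fa_add_closed fa_mult_closed mon_carrier gen_carrier) auto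
qed

lemma der_ext_closed:
  assumes "p \<in> carrier (free_alg n)" "\<forall>i\<in>{1..n}. D i \<in> carrier (free_alg n)"
  shows "(der_ext D p :: nat list \<Rightarrow> 'k::field) \<in> carrier (free_alg n)"
proof -
  have "der_ext D p = (\<lambda>w. \<Sum>u\<in>{u. p u \<noteq> 0}. p u * der_word D u w)"
    unfolding der_ext_def by simp
  also have "\<dots> \<in> carrier (free_alg n)"
  proof -
    have fin: "finite {u. p u \<noteq> 0}" and st: "\<And>u. p u \<noteq> 0 \<Longrightarrow> set u \<subseteq> {1..n}"
      using assms(1) unfolding carrier_fa by auto
    show ?thesis by (intro carrier_sum fin ballI der_word_closed assms(2) st) simp
  qed
  finally show ?thesis .
qed

lemma der_ext_add: "fsupp p \<Longrightarrow> fsupp q \<Longrightarrow> der_ext D (\<lambda>w. p w + q w) = (\<lambda>w. der_ext D p w + der_ext D q w :: 'k::field)"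
  unfolding der_ext_lext by (rule ext) (rule lext_add)

lemma der_ext_scale: "der_ext D (\<lambda>w. c * p w) = (\<lambda>w. c * der_ext D p w :: 'k::field)"
  unfolding der_ext_lext by (rule ext) (rule lext_scale)

lemma der_ext_sum: "finite A \<Longrightarrow> (\<forall>i\<in>A. fsupp (f i)) \<Longrightarrow>
   der_ext D (\<lambda>w. \<Sum>i\<in>A. c i * f i w) = (\<lambda>w. \<Sum>i\<in>A. c i * der_ext D (f i) w :: 'k::field)"
  unfolding der_ext_lext by (rule ext) (rule lext_sum)

lemma der_ext_mon: "der_ext D (mon u) = (der_word D u :: nat list \<Rightarrow> 'k::field)"
  unfolding der_ext_lext by (rule ext) (rule lext_mon)

lemma der_ext_gen: "der_ext D (gen a) = (D a :: nat list \<Rightarrow> 'k::field)"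
  by (simp add: gen_mon der_ext_mon der_word_single)

lemma der_ext_zero: "der_ext D (\<lambda>w. 0) = (\<lambda>w. 0 :: 'k::field)"
  unfolding der_ext_def by simp

lemma der_ext_diff: "fsupp p \<Longrightarrow> fsupp q \<Longrightarrow> der_ext D (\<lambda>w. p w - q w) = (\<lambda>w. der_ext D p w - der_ext D q w :: 'k::field)"
  using der_ext_add[of p "\<lambda>w. -1 * q w" D] der_ext_scale[of D "-1" q] fsupp_scale[of q "-1"] by simp

lemma lext_as_fun: "fsupp q \<Longrightarrow> q = (\<lambda>x. \<Sum>v\<in>{v. q v \<noteq> 0}. q v * mon v x :: 'k::field)"
  using lext_repr[of q] unfolding lext_def by auto

lemma der_ext_mult:
  fixes p q :: "nat list \<Rightarrow> 'k::field"
  assumes p: "fsupp p" and q: "fsupp q"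
  shows "der_ext D (fa_mult p q) = (\<lambda>w. fa_mult (der_ext D p) q w + fa_mult p (der_ext D q) w)"
proof (rule ext)
  fix w
  let ?Sp = "{u. p u \<noteq> 0}" and ?Sq = "{v. q v \<noteq> 0}"
  have "der_ext D (fa_mult p q) w = (\<Sum>u\<in>?Sp. \<Sum>v\<in>?Sq. p u * q v * der_word D (u @ v) w)"
    unfolding der_ext_lext using p q by (intro lext_mult) auto
  also have "\<dots> = (\<Sum>u\<in>?Sp. \<Sum>v\<in>?Sq. p u * q v * fa_mult (der_word D u) (mon v) w)
       + (\<Sum>u\<in>?Sp. \<Sum>v\<in>?Sq. p u * q v * fa_mult (mon u) (der_word D v) w)"
    by (simp add: der_word_append ring_distribs sum.distrib)
  also have "(\<Sum>u\<in>?Sp. \<Sum>v\<in>?Sq. p u * q v * fa_mult (der_word D u) (mon v) w) = fa_mult (der_ext D p) q w"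
  proof -
    have "fa_mult (der_ext D p) q = fa_mult (\<lambda>x. \<Sum>u\<in>?Sp. p u * der_word D u x) (\<lambda>x. \<Sum>v\<in>?Sq. q v * mon v x)"
      unfolding der_ext_def by (subst lext_as_fun[OF q]) simp
    then show ?thesis
      by (simp add: fa_mult_sumL fa_mult_sumR sum_distrib_left mult.assoc)
  qed
  also have "(\<Sum>u\<in>?Sp. \<Sum>v\<in>?Sq. p u * q v * fa_mult (mon u) (der_word D v) w) = fa_mult p (der_ext D q) w"
  proof -
    have "fa_mult p (der_ext D q) = fa_mult (\<lambda>x. \<Sum>u\<in>?Sp. p u * mon u x) (\<lambda>x. \<Sum>v\<in>?Sq. q v * der_word D v x)"
      unfolding der_ext_def by (subst (1) lext_as_fun[OF p]) simp
    then show ?thesis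
      by (simp add: fa_mult_sumL fa_mult_sumR sum_distrib_left mult.assoc)
  qed
  finally show "der_ext D (fa_mult p q) w = fa_mult (der_ext D p) q w + fa_mult p (der_ext D q) w" .
qed


lemma comm_mon: "comm (mon u) (mon v) = (\<lambda>w. mon (u@v) w - mon (v@u) w :: 'k::field)"
  unfolding comm_def by (simp add: mon_mult)

lemma comm_addL: "comm (\<lambda>w. p w + q w) r = (\<lambda>w. comm p r w + comm q r w :: 'k::field)"
  unfolding comm_def by (simp add: algebra_simps fa_mult_addL fa_mult_addR)

lemma comm_addR: "comm r (\<lambda>w. p w + q w) = (\<lambda>w. comm r p w + comm r q w :: 'k::field)"
  unfolding comm_def by (simp add: algebra_simps fa_mult_addL fa_mult_addR)

lemma comm_diffL: "comm (\<lambda>w. p w - q w) r = (\<lambda>w. comm p r w - comm q r w :: 'k::field)"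
  unfolding comm_def by (simp add: algebra_simps fa_mult_diffL fa_mult_diffR)

lemma comm_diffR: "comm r (\<lambda>w. p w - q w) = (\<lambda>w. comm r p w - comm r q w :: 'k::field)"
  unfolding comm_def by (simp add: algebra_simps fa_mult_diffL fa_mult_diffR)

lemma delta_gen_carrier: "i \<in> {1..6} \<Longrightarrow> (delta_gen i :: nat list \<Rightarrow> 'k::field) \<in> carrier (free_alg 6)"
  unfolding delta_gen_def
  by (auto intro!: fa_add_closed carrier_comm gen_carrier)

lemma delta_carrier: "p \<in> carrier (free_alg 6) \<Longrightarrow> (delta p :: nat list \<Rightarrow> 'k::field) \<in> carrier (free_alg 6)"
  unfolding delta_def by (rule der_ext_closed) (auto intro: delta_gen_carrier)

lemma delta_gen_eq: "delta (gen i) = delta_gen i"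
  unfolding delta_def by (rule der_ext_gen)

lemma fsupp_comm: "fsupp p \<Longrightarrow> fsupp q \<Longrightarrow> fsupp (comm p (q::nat list \<Rightarrow> 'k::field))"
  unfolding comm_def
  using fsupp_add[of "fa_mult p q" "\<lambda>w. -1 * fa_mult q p w"] fsupp_scale[of "fa_mult q p" "-1"]
    finite_subset[OF fa_mult_supp[of p q]] finite_subset[OF fa_mult_supp[of q p]]
  by auto

lemma fsupp_mult: "fsupp p \<Longrightarrow> fsupp q \<Longrightarrow> fsupp (fa_mult p (q::nat list \<Rightarrow> 'k::field))"
  using finite_subset[OF fa_mult_supp[of p q]] by auto

lemma fsupp_mon: "fsupp (mon u :: nat list \<Rightarrow> 'k::field)"
  by (simp add: supp_mon)

lemma fsupp_gen: "fsupp (gen u :: nat list \<Rightarrow> 'k::field)"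
  by (simp add: gen_mon supp_mon)

lemma der_ext_comm: "fsupp p \<Longrightarrow> fsupp q \<Longrightarrow>
  der_ext D (comm p q) = (\<lambda>w. comm (der_ext D p) q w + comm p (der_ext D q) w :: 'k::field)"
  unfolding comm_def
  by (simp add: der_ext_diff fsupp_mult der_ext_mult) (rule ext, simp add: algebra_simps)

lemma delta_relB: "delta (relB :: nat list \<Rightarrow> 'k::field) = (\<lambda>w. 0)"
proof -
  have "delta (relB :: nat list \<Rightarrow> 'k::field) = (\<lambda>w.
      comm (delta_gen 1) (gen 6) w + comm (gen 1) (delta_gen 6) w
    + (comm (delta_gen 5) (gen 2) w + comm (gen 5) (delta_gen 2) w)
    + (comm (delta_gen 4) (gen 3) w + comm (gen 4) (delta_gen 3) w))"
    unfolding relB_def delta_def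
    by (simp add: der_ext_add fsupp_comm fsupp_gen fsupp_add der_ext_comm der_ext_gen)
  also have "\<dots> = (\<lambda>w. 0)"
    unfolding delta_gen_def
    by (simp add: gen_mon comm_mon comm_addL comm_addR comm_diffL comm_diffR)
  finally show ?thesis .
qed

definition Erel :: "nat \<Rightarrow> nat list \<Rightarrow> 'k::field" where
  "Erel a = (\<lambda>w. comm (gen 7) (gen a) w - delta_gen a w)"

lemma relA_Erel:
  "relA 6 = Erel 1" "relA 5 = (\<lambda>w. - Erel 2 w)" "relA 4 = (\<lambda>w. - Erel 3 w)"
  "relA 3 = Erel 4" "relA 2 = Erel 5" "relA 1 = (\<lambda>w. - Erel 6 w)"
  unfolding relA_def Erel_def delta_gen_def
  by (simp_all add: gen_mon comm_mon) (rule ext, simp add: algebra_simps)+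

lemma relA_7: "relA 7 = relB"
  unfolding relA_def relB_def by (simp add: algebra_simps)


lemma fa_ainv: "p \<in> carrier (free_alg n) \<Longrightarrow> \<ominus>\<^bsub>free_alg n\<^esub> p = (\<lambda>w. - p w :: 'k::field)"
proof -
  assume p: "p \<in> carrier (free_alg n)"
  interpret ring "free_alg n :: (nat list \<Rightarrow> 'k) ring" by (rule ring_fa)
  show ?thesis
    using p carrier_scale[OF p, of "-1"] by (intro minus_equality) (auto simp: fa_simps)
qed

lemma ideal_faI:
  assumes sub: "K \<subseteq> carrier (free_alg n)"
    and z: "(\<lambda>w. 0) \<in> K"
    and ad: "\<And>p q. p \<in> K \<Longrightarrow> q \<in> K \<Longrightarrow> (\<lambda>w. p w + q w) \<in> K"
    and ng: "\<And>p. p \<in> K \<Longrightarrow> (\<lambda>w. - p w) \<in> K"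
    and l: "\<And>p x. p \<in> K \<Longrightarrow> x \<in> carrier (free_alg n) \<Longrightarrow> fa_mult x p \<in> K"
    and r: "\<And>p x. p \<in> K \<Longrightarrow> x \<in> carrier (free_alg n) \<Longrightarrow> fa_mult p x \<in> K"
  shows "ideal K (free_alg n :: (nat list \<Rightarrow> 'k::field) ring)"
proof (rule idealI)
  show "ring (free_alg n :: (nat list \<Rightarrow> 'k::field) ring)" by (rule ring_fa)
  show "subgroup K (add_monoid (free_alg n :: (nat list \<Rightarrow> 'k::field) ring))"
  proof
    show "K \<subseteq> carrier (add_monoid (free_alg n))" using sub by simp
    show "\<And>x y. x \<in> K \<Longrightarrow> y \<in> K \<Longrightarrow> x \<otimes>\<^bsub>add_monoid (free_alg n)\<^esub> y \<in> K"
      using ad by (simp add: fa_simps)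
    show "\<one>\<^bsub>add_monoid (free_alg n)\<^esub> \<in> K" using z by (simp add: fa_simps)
    show "\<And>x. x \<in> K \<Longrightarrow> inv\<^bsub>add_monoid (free_alg n)\<^esub> x \<in> K"
      using ng fa_ainv sub unfolding a_inv_def[symmetric] by fastforce
  qed
qed (use l r in \<open>simp_all add: fa_simps\<close>)

lemma relA_carrier: "relA ` {1..7} \<subseteq> carrier (free_alg 7 :: (nat list \<Rightarrow> 'k::field) ring)"
  unfolding relA_def by (auto intro!: fa_add_closed carrier_comm gen_carrier)

lemma relB_carrier: "relB \<in> carrier (free_alg 6 :: (nat list \<Rightarrow> 'k::field) ring)"
  unfolding relB_def by (auto intro!: fa_add_closed carrier_comm gen_carrier)

lemma idealA_ideal: "ideal (idealA :: (nat list \<Rightarrow> 'k::field) set) (free_alg 7)"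
  unfolding idealA_def by (rule ring.genideal_ideal[OF ring_fa relA_carrier])

lemma idealB_ideal: "ideal (idealB :: (nat list \<Rightarrow> 'k::field) set) (free_alg 6)"
  unfolding idealB_def by (rule ring.genideal_ideal[OF ring_fa]) (simp add: relB_carrier)

lemma relA_in: "j \<in> {1..7} \<Longrightarrow> relA j \<in> (idealA :: (nat list \<Rightarrow> 'k::field) set)"
  unfolding idealA_def using ring.genideal_self[OF ring_fa relA_carrier] by blast

lemma relB_in: "relB \<in> (idealB :: (nat list \<Rightarrow> 'k::field) set)"
  unfolding idealB_def using ring.genideal_self'[OF ring_fa relB_carrier] by blast

lemma fa_scalar_mon: "fa_scalar c = (\<lambda>w. c * mon [] w)"
  unfolding fa_scalar_def mon_def by auto

lemma fa_scalar_carrier: "fa_scalar c \<in> carrier (free_alg n :: (nat list \<Rightarrow> 'k::field) ring)"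
  unfolding fa_scalar_mon by (intro carrier_scale mon_carrier) simp

lemma fa_scalar_mult: "fa_mult (fa_scalar c) p = (\<lambda>w. c * p w :: 'k::field)"
  unfolding fa_scalar_mon fa_mult_scaleL mon_Nil fa_mult_oneL by simp

lemma fa_scalar_multR: "fa_mult p (fa_scalar c) = (\<lambda>w. c * p w :: 'k::field)"
  unfolding fa_scalar_mon fa_mult_scaleR mon_Nil fa_mult_oneR by simp

context
  fixes I :: "(nat list \<Rightarrow> 'k::field) set" and n :: nat
  assumes I: "ideal I (free_alg n)"
begin

lemma I_sub: "I \<subseteq> carrier (free_alg n)"
  using I by (simp add: ideal_def additive_subgroup.a_subset)

lemma I_add: "p \<in> I \<Longrightarrow> q \<in> I \<Longrightarrow> (\<lambda>w. p w + q w) \<in> I"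
  using I additive_subgroup.a_closed[of I "free_alg n"] by (simp add: ideal_def fa_simps)

lemma I_zero: "(\<lambda>w. 0) \<in> I"
  using I additive_subgroup.zero_closed[of I "free_alg n"] by (simp add: ideal_def fa_simps)

lemma I_scale: "p \<in> I \<Longrightarrow> (\<lambda>w. c * p w) \<in> I"
  using ideal.I_l_closed[OF I _ fa_scalar_carrier, of p c] by (simp add: fa_simps fa_scalar_mult)

lemma I_diff: "p \<in> I \<Longrightarrow> q \<in> I \<Longrightarrow> (\<lambda>w. p w - q w) \<in> I"
  using I_add[of p "\<lambda>w. -1 * q w"] I_scale[of q "-1"] by simp

lemma I_neg: "p \<in> I \<Longrightarrow> (\<lambda>w. - p w) \<in> I"
  using I_scale[of p "-1"] by simp

lemma I_multL: "p \<in> I \<Longrightarrow> x \<in> carrier (free_alg n) \<Longrightarrow> fa_mult x p \<in> I"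
  using ideal.I_l_closed[OF I] by (simp add: fa_simps)

lemma I_multR: "p \<in> I \<Longrightarrow> x \<in> carrier (free_alg n) \<Longrightarrow> fa_mult p x \<in> I"
  using ideal.I_r_closed[OF I] by (simp add: fa_simps)

lemma I_sum: "finite A \<Longrightarrow> (\<forall>i\<in>A. f i \<in> I) \<Longrightarrow> (\<lambda>w. \<Sum>i\<in>A. c i * f i w) \<in> I"
proof (induction A rule: finite_induct)
  case empty then show ?case by (simp add: I_zero)
next
  case (insert a A)
  then show ?case using I_add[OF I_scale[of "f a" "c a"], of "\<lambda>w. \<Sum>i\<in>A. c i * f i w"] by simp
qed

end

lemma idealA_sub: "idealA \<subseteq> carrier (free_alg 7 :: (nat list \<Rightarrow> 'k::field) ring)"
  by (rule I_sub[OF idealA_ideal])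

lemma idealB_sub: "idealB \<subseteq> carrier (free_alg 6 :: (nat list \<Rightarrow> 'k::field) ring)"
  by (rule I_sub[OF idealB_ideal])

lemma idealB_idealA: "idealB \<subseteq> (idealA :: (nat list \<Rightarrow> 'k::field) set)"
proof -
  let ?K = "idealA \<inter> carrier (free_alg 6) :: (nat list \<Rightarrow> 'k::field) set"
  have "ideal ?K (free_alg 6)"
  proof (rule ideal_faI)
    show "(\<lambda>w. 0) \<in> ?K" by (simp add: I_zero[OF idealA_ideal] carrier_zero)
    show "fa_mult x p \<in> ?K" if "p \<in> ?K" "x \<in> carrier (free_alg 6)" for p x
      using that I_multL[OF idealA_ideal, of p x] carrier_mono[of 6 7 x] fa_mult_closed[of x 6 p] by auto
    show "fa_mult p x \<in> ?K" if "p \<in> ?K" "x \<in> carrier (free_alg 6)" for p x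
      using that I_multR[OF idealA_ideal, of p x] carrier_mono[of 6 7 x] fa_mult_closed[of p 6 x] by auto
  qed (auto intro: I_add[OF idealA_ideal] I_neg[OF idealA_ideal] fa_add_closed carrier_scale[of _ _ "-1", simplified]
      I_multL[OF idealA_ideal] I_multR[OF idealA_ideal] carrier_mono[of 6 7] fa_mult_closed)
  moreover have "{relB} \<subseteq> ?K" using relA_in[of 7, where 'k='k] relA_7[where 'a='k] relB_carrier[where 'k='k] by auto
  ultimately have "idealB \<subseteq> ?K" unfolding idealB_def by (rule ring.genideal_minimal[OF ring_fa])
  then show ?thesis by auto
qed

lemma delta_idealB: "p \<in> idealB \<Longrightarrow> delta p \<in> (idealB :: (nat list \<Rightarrow> 'k::field) set)"
proof -
  let ?K = "{p \<in> idealB. delta p \<in> idealB} :: (nat list \<Rightarrow> 'k::field) set"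
  note IB = idealB_ideal[where 'k='k]
  have fs: "\<And>p. p \<in> idealB \<Longrightarrow> fsupp (p::nat list \<Rightarrow> 'k)"
    using idealB_sub carrier_fsupp by blast
  have "ideal ?K (free_alg 6)"
  proof (rule ideal_faI)
    show "?K \<subseteq> carrier (free_alg 6)" using idealB_sub by auto
    show "(\<lambda>w. 0) \<in> ?K" using I_zero[OF IB] by (simp add: delta_def der_ext_zero)
    show "(\<lambda>w. p w + q w) \<in> ?K" if "p \<in> ?K" "q \<in> ?K" for p q
      using that I_add[OF IB] fs by (simp add: delta_def der_ext_add)
    show "(\<lambda>w. - p w) \<in> ?K" if "p \<in> ?K" for p
      using that I_neg[OF IB] der_ext_scale[of delta_gen "-1" p] by (simp add: delta_def)
    show "fa_mult x p \<in> ?K" if "p \<in> ?K" "x \<in> carrier (free_alg 6)" for p x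
    proof -
      have "delta (fa_mult x p) = (\<lambda>w. fa_mult (delta x) p w + fa_mult x (delta p) w)"
        unfolding delta_def using that fs carrier_fsupp by (intro der_ext_mult) auto
      moreover from that have p1: "p \<in> idealB" "delta p \<in> idealB" by auto
      moreover have "fa_mult (delta x) p \<in> idealB" by (rule I_multL[OF IB p1(1) delta_carrier[OF that(2)]])
      moreover have "fa_mult x (delta p) \<in> idealB" by (rule I_multL[OF IB p1(2) that(2)])
      moreover have "fa_mult x p \<in> idealB" by (rule I_multL[OF IB p1(1) that(2)])
      ultimately show ?thesis using I_add[OF IB] by auto
    qed
    show "fa_mult p x \<in> ?K" if "p \<in> ?K" "x \<in> carrier (free_alg 6)" for p x
    proof -
      have "delta (fa_mult p x) = (\<lambda>w. fa_mult (delta p) x w + fa_mult p (delta x) w)"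
        unfolding delta_def using that fs carrier_fsupp by (intro der_ext_mult) auto
      moreover from that have p1: "p \<in> idealB" "delta p \<in> idealB" by auto
      moreover have "fa_mult (delta p) x \<in> idealB" by (rule I_multR[OF IB p1(2) that(2)])
      moreover have "fa_mult p (delta x) \<in> idealB" by (rule I_multR[OF IB p1(1) delta_carrier[OF that(2)]])
      moreover have "fa_mult p x \<in> idealB" by (rule I_multR[OF IB p1(1) that(2)])
      ultimately show ?thesis using I_add[OF IB] by auto
    qed
  qed
  moreover have "{relB} \<subseteq> ?K" using relB_in[where 'k='k] delta_relB[where 'k='k] I_zero[OF IB] by auto
  ultimately have "idealB \<subseteq> ?K" unfolding idealB_def[of] by (rule ring.genideal_minimal[OF ring_fa])
  then show "p \<in> idealB \<Longrightarrow> delta p \<in> idealB" by auto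
qed


type_synonym 'k V = "nat \<Rightarrow> nat list \<Rightarrow> 'k"

definition goodV :: "'k::field V \<Rightarrow> bool" where
  "goodV g \<longleftrightarrow> (\<forall>n. g n \<in> carrier (free_alg 6)) \<and> (\<exists>N. \<forall>n>N. g n = (\<lambda>w. 0))"

definition act :: "nat \<Rightarrow> 'k::field V \<Rightarrow> 'k V" where
  "act a g = (if a = 7 then (\<lambda>n w. (if n = 0 then 0 else g (n-1) w) + delta (g n) w)
              else (\<lambda>n. fa_mult (gen a) (g n)))"

definition actw :: "nat list \<Rightarrow> 'k::field V \<Rightarrow> 'k V" where
  "actw u g = foldr act u g"

definition rho :: "(nat list \<Rightarrow> 'k::field) \<Rightarrow> 'k V \<Rightarrow> 'k V" where
  "rho p g = (\<lambda>n w. lext (\<lambda>u (m,v). actw u g m v) p (n,w))"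

lemma actw_Nil[simp]: "actw [] g = g" by (simp add: actw_def)
lemma actw_Cons[simp]: "actw (a # u) g = act a (actw u g)" by (simp add: actw_def)
lemma actw_append: "actw (u @ v) g = actw u (actw v g)" by (simp add: actw_def)

lemma act7: "act 7 g = (\<lambda>n w. (if n = 0 then 0 else g (n-1) w) + delta (g n) w)"
  by (simp add: act_def)

lemma actn7: "a \<noteq> 7 \<Longrightarrow> act a g = (\<lambda>n. fa_mult (gen a) (g n))"
  by (simp add: act_def)

lemma goodV_carrier: "goodV g \<Longrightarrow> g n \<in> carrier (free_alg 6)"
  by (simp add: goodV_def)

lemma goodV_fsupp: "goodV g \<Longrightarrow> fsupp (g n)"
  using carrier_fsupp goodV_carrier by blast

lemma goodV_sum: "finite A \<Longrightarrow> (\<forall>i\<in>A. goodV (h i)) \<Longrightarrow> goodV (\<lambda>n w. \<Sum>i\<in>A. c i * h i n w)"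
proof (induction A rule: finite_induct)
  case empty then show ?case by (simp add: goodV_def carrier_zero)
next
  case (insert a A)
  then obtain N1 where N1: "\<forall>n>N1. h a n = (\<lambda>w. 0)" by (auto simp: goodV_def)
  from insert obtain N2 where N2: "\<forall>n>N2. (\<lambda>w. \<Sum>i\<in>A. c i * h i n w) = (\<lambda>w. 0)" by (auto simp: goodV_def)
  have "\<forall>n>max N1 N2. (\<lambda>w. \<Sum>i\<in>insert a A. c i * h i n w) = (\<lambda>w. 0)"
  proof (intro allI impI)
    fix n assume "n > max N1 N2"
    then have "h a n = (\<lambda>w. 0)" "(\<lambda>w. \<Sum>i\<in>A. c i * h i n w) = (\<lambda>w. 0)" using N1 N2 by auto
    then show "(\<lambda>w. \<Sum>i\<in>insert a A. c i * h i n w) = (\<lambda>w. 0)"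
      using insert by (simp add: fun_eq_iff)
  qed
  moreover have "\<forall>n. (\<lambda>w. \<Sum>i\<in>insert a A. c i * h i n w) \<in> carrier (free_alg 6)"
    using insert by (intro allI carrier_sum) (auto simp: goodV_def)
  ultimately show ?case unfolding goodV_def by blast
qed

lemma goodV_act: "a \<in> {1..7} \<Longrightarrow> goodV g \<Longrightarrow> goodV (act a g)"
proof -
  assume a: "a \<in> {1..7}" and g: "goodV g"
  then obtain N where N: "\<forall>n>N. g n = (\<lambda>w. 0)" by (auto simp: goodV_def)
  show ?thesis
  proof (cases "a = 7")
    case True
    have c1: "g m \<in> carrier (free_alg 6)" for m using g by (rule goodV_carrier)
    have c2: "delta (g m) \<in> carrier (free_alg 6)" for m using c1 by (rule delta_carrier)
    have "act a g n \<in> carrier (free_alg 6)" for n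
      unfolding True act7
      by (cases "n = 0") (simp_all add: c2 fa_add_closed[OF c1 c2])
    moreover have "\<forall>n>Suc N. act a g n = (\<lambda>w. 0)"
      unfolding True act7 using N by (auto simp: delta_def der_ext_zero)
    ultimately show ?thesis by (auto simp: goodV_def)
  next
    case False
    then have "a \<in> {1..6}" using a by auto
    then have "act a g n \<in> carrier (free_alg 6)" for n
      unfolding actn7[OF False] using fa_mult_closed[OF gen_carrier goodV_carrier[OF g]] by auto
    moreover have "\<forall>n>N. act a g n = (\<lambda>w. 0)"
      unfolding actn7[OF False] using N by (auto simp: fa_mult_zeroR)
    ultimately show ?thesis by (auto simp: goodV_def)
  qed
qed

lemma goodV_actw: "set u \<subseteq> {1..7} \<Longrightarrow> goodV g \<Longrightarrow> goodV (actw u g)"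
  by (induction u) (auto intro: goodV_act)

lemma act_lin:
  assumes a: "a \<in> {1..7}" and A: "finite A" and h: "\<forall>i\<in>A. goodV (h i)"
  shows "act a (\<lambda>n w. \<Sum>i\<in>A. c i * h i n w) = (\<lambda>n w. \<Sum>i\<in>A. c i * act a (h i) n w)"
proof (cases "a = 7")
  case True
  have "delta (\<lambda>w. \<Sum>i\<in>A. c i * h i n w) = (\<lambda>w. \<Sum>i\<in>A. c i * delta (h i n) w)" for n
    unfolding delta_def using A h by (intro der_ext_sum) (auto intro: goodV_fsupp)
  then show ?thesis unfolding True act7
    by (auto simp: fun_eq_iff ring_distribs sum.distrib)
next
  case False
  then show ?thesis by (simp add: actn7 fa_mult_sumR)
qed

lemma actw_lin:
  assumes u: "set u \<subseteq> {1..7}" and A: "finite A" and h: "\<forall>i\<in>A. goodV (h i)"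
  shows "actw u (\<lambda>n w. \<Sum>i\<in>A. c i * h i n w) = (\<lambda>n w. \<Sum>i\<in>A. c i * actw u (h i) n w)"
  using u
proof (induction u)
  case Nil then show ?case by simp
next
  case (Cons a u)
  then have "actw (a # u) (\<lambda>n w. \<Sum>i\<in>A. c i * h i n w) = act a (\<lambda>n w. \<Sum>i\<in>A. c i * actw u (h i) n w)"
    by simp
  also have "\<dots> = (\<lambda>n w. \<Sum>i\<in>A. c i * act a (actw u (h i)) n w)"
  proof (rule act_lin)
    have su: "set u \<subseteq> {1..7}" using Cons.prems by simp
    show "\<forall>i\<in>A. goodV (actw u (h i))" using su h goodV_actw by blast
  qed (use Cons.prems A in auto)
  finally show ?case by simp
qed

lemma rho_def': "rho p g = (\<lambda>n w. \<Sum>u\<in>{u. p u \<noteq> 0}. p u * actw u g n w)"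
  unfolding rho_def lext_def by simp

lemma rho_supp: "finite S \<Longrightarrow> {u. p u \<noteq> 0} \<subseteq> S \<Longrightarrow> rho p g = (\<lambda>n w. \<Sum>u\<in>S. p u * actw u g n w)"
  unfolding rho_def by (auto simp: lext_supp)

lemma rho_add: "fsupp p \<Longrightarrow> fsupp q \<Longrightarrow> rho (\<lambda>w. p w + q w) g = (\<lambda>n w. rho p g n w + rho q g n w)"
  unfolding rho_def by (simp add: lext_add)

lemma rho_scale: "rho (\<lambda>w. c * p w) g = (\<lambda>n w. c * rho p g n w)"
  unfolding rho_def by (simp add: lext_scale)

lemma rho_diff: "fsupp p \<Longrightarrow> fsupp q \<Longrightarrow> rho (\<lambda>w. p w - q w) g = (\<lambda>n w. rho p g n w - rho q g n w)"
  using rho_add[of p "\<lambda>w. -1 * q w" g] rho_scale[of "-1" q g] fsupp_scale[of q "-1"] by simp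

lemma rho_zero: "rho (\<lambda>w. 0) g = (\<lambda>n w. 0)"
  unfolding rho_def by (simp add: lext_zero)

lemma rho_sum: "finite A \<Longrightarrow> (\<forall>i\<in>A. fsupp (f i)) \<Longrightarrow>
   rho (\<lambda>w. \<Sum>i\<in>A. c i * f i w) g = (\<lambda>n w. \<Sum>i\<in>A. c i * rho (f i) g n w)"
  unfolding rho_def by (simp add: lext_sum)

lemma rho_mon: "rho (mon u) g = actw u g"
  unfolding rho_def by (simp add: lext_mon)

lemma rho_gen: "rho (gen a) g = act a g"
  by (simp add: gen_mon rho_mon)

lemma carrier_words: "p \<in> carrier (free_alg n) \<Longrightarrow> p u \<noteq> 0 \<Longrightarrow> set u \<subseteq> {1..n}"
  unfolding carrier_fa by auto

lemma goodV_rho: "p \<in> carrier (free_alg 7) \<Longrightarrow> goodV g \<Longrightarrow> goodV (rho p g)"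
  unfolding rho_def'
proof (rule goodV_sum)
  assume p: "p \<in> carrier (free_alg 7)" and g: "goodV g"
  show "finite {u. p u \<noteq> 0}" using p carrier_fsupp by blast
  show "\<forall>i\<in>{u. p u \<noteq> 0}. goodV (actw i g)"
    using carrier_words[OF p] goodV_actw g by blast
qed

lemma rho_mult:
  assumes p: "p \<in> carrier (free_alg 7)" and q: "q \<in> carrier (free_alg 7)" and g: "goodV g"
  shows "rho (fa_mult p q) g = rho p (rho q (g :: 'k::field V))"
proof (rule ext, rule ext)
  fix n w
  let ?Sp = "{u. p u \<noteq> 0}" and ?Sq = "{v. q v \<noteq> 0}"
  have fp: "finite ?Sp" and fq: "finite ?Sq" using p q by (auto simp: carrier_fa)
  have "rho (fa_mult p q) g n w = (\<Sum>u\<in>?Sp. \<Sum>v\<in>?Sq. p u * q v * actw (u @ v) g n w)"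
    unfolding rho_def using lext_mult[OF fp fq, of p q "\<lambda>u (m,v). actw u g m v" "(n,w)"] by simp
  also have "\<dots> = (\<Sum>u\<in>?Sp. p u * (\<Sum>v\<in>?Sq. q v * actw u (actw v g) n w))"
    by (simp add: actw_append sum_distrib_left mult.assoc)
  also have "\<dots> = (\<Sum>u\<in>?Sp. p u * actw u (rho q g) n w)"
  proof (rule sum.cong[OF refl])
    fix u assume u: "u \<in> ?Sp"
    have "actw u (rho q g) = actw u (\<lambda>n w. \<Sum>v\<in>?Sq. q v * actw v g n w)"
      by (simp add: rho_def')
    also have "\<dots> = (\<lambda>n w. \<Sum>v\<in>?Sq. q v * actw u (actw v g) n w)"
    proof (rule actw_lin)
      show "set u \<subseteq> {1..7}" using u carrier_words[OF p] by blast
      show "\<forall>i\<in>?Sq. goodV (actw i g)" using carrier_words[OF q] goodV_actw g by blast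
    qed (rule fq)
    finally show "p u * (\<Sum>v\<in>?Sq. q v * actw u (actw v g) n w) = p u * actw u (rho q g) n w" by simp
  qed
  also have "\<dots> = rho p (rho q g) n w" by (simp add: rho_def')
  finally show "rho (fa_mult p q) g n w = rho p (rho q g) n w" .
qed

lemma actw6: "set u \<subseteq> {1..6} \<Longrightarrow> actw u g = (\<lambda>n. fa_mult (mon u) (g n))"
proof (induction u)
  case Nil then show ?case by (simp add: mon_Nil fa_mult_oneL)
next
  case (Cons a u)
  then have "a \<noteq> 7" by auto
  with Cons show ?case
    by (simp add: actn7 fa_mult_assoc[symmetric] gen_mon mon_mult)
qed

lemma rho6: "p \<in> carrier (free_alg 6) \<Longrightarrow> rho p g = (\<lambda>n. fa_mult p (g n))"
proof -
  assume p: "p \<in> carrier (free_alg 6)"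
  have "rho p g = (\<lambda>n w. \<Sum>u\<in>{u. p u \<noteq> 0}. p u * fa_mult (mon u) (g n) w)"
    unfolding rho_def' using p by (intro ext sum.cong refl) (simp add: actw6[OF carrier_words[OF p]])
  also have "\<dots> = (\<lambda>n. fa_mult (\<lambda>x. \<Sum>u\<in>{u. p u \<noteq> 0}. p u * mon u x) (g n))"
    by (simp add: fa_mult_sumL)
  also have "\<dots> = (\<lambda>n. fa_mult p (g n))"
    using lext_as_fun[OF carrier_fsupp[OF p], symmetric] by (simp only:)
  finally show ?thesis .
qed


lemma rho_Erel:
  assumes a: "a \<in> {1..6}" and g: "goodV (g :: 'k::field V)"
  shows "rho (Erel a) g = (\<lambda>n w. 0)"
proof -
  have g7: "gen 7 \<in> carrier (free_alg 7 :: (nat list \<Rightarrow> 'k) ring)" by (rule gen_carrier) simp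
  have ga: "gen a \<in> carrier (free_alg 7 :: (nat list \<Rightarrow> 'k) ring)" using a by (intro gen_carrier) simp
  have a7: "a \<noteq> 7" using a by auto
  have dg: "delta_gen a \<in> carrier (free_alg 6 :: (nat list \<Rightarrow> 'k) ring)" using a by (rule delta_gen_carrier)
  have r1: "rho (fa_mult (gen 7) (gen a)) g = act 7 (act a g)"
    by (simp add: rho_mult[OF g7 ga g] rho_gen)
  have r2: "rho (fa_mult (gen a) (gen 7)) g = act a (act 7 g)"
    by (simp add: rho_mult[OF ga g7 g] rho_gen)
  have r3: "rho (delta_gen a) g = (\<lambda>n. fa_mult (delta_gen a) (g n))" by (rule rho6[OF dg])
  have fs1: "fsupp (fa_mult (gen 7) (gen a) :: nat list \<Rightarrow> 'k)" "fsupp (fa_mult (gen a) (gen 7) :: nat list \<Rightarrow> 'k)"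
    by (simp_all add: fsupp_mult fsupp_gen)
  have fs2: "fsupp (comm (gen 7) (gen a) :: nat list \<Rightarrow> 'k)" by (simp add: fsupp_comm fsupp_gen)
  have fs3: "fsupp (delta_gen a :: nat list \<Rightarrow> 'k)" using dg by (rule carrier_fsupp)
  have E: "rho (Erel a) g = (\<lambda>n w. act 7 (act a g) n w - act a (act 7 g) n w - fa_mult (delta_gen a) (g n) w)"
    unfolding Erel_def rho_diff[OF fs2 fs3] unfolding comm_def rho_diff[OF fs1] r1 r2 r3 by simp
  have ld: "delta (fa_mult (gen a) (g n)) = (\<lambda>w. fa_mult (delta_gen a) (g n) w + fa_mult (gen a) (delta (g n)) w)" for n
  proof -
    have "delta (fa_mult (gen a) (g n)) = (\<lambda>w. fa_mult (delta (gen a)) (g n) w + fa_mult (gen a) (delta (g n)) w)"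
      unfolding delta_def by (rule der_ext_mult[OF fsupp_gen goodV_fsupp[OF g]])
    then show ?thesis by (simp add: delta_gen_eq)
  qed
  show ?thesis unfolding E
  proof (intro ext)
    fix n w
    show "act 7 (act a g) n w - act a (act 7 g) n w - fa_mult (delta_gen a) (g n) w = 0"
      by (cases "n = 0") (simp_all add: act7 actn7[OF a7] ld fa_mult_addR fa_mult_zeroR)
  qed
qed

lemma rho_relA:
  assumes j: "j \<in> {1..6}" and g: "goodV (g :: 'k::field V)"
  shows "rho (relA j) g = (\<lambda>n w. 0)"
proof -
  have neg: "rho (\<lambda>w. - Erel a w) g = (\<lambda>n w. 0)" if "a \<in> {1..6}" for a
    using rho_scale[of "-1" "Erel a" g] rho_Erel[OF that g] by simp
  have "j = 1 \<or> j = 2 \<or> j = 3 \<or> j = 4 \<or> j = 5 \<or> j = 6" using j by auto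
  then show ?thesis
    by (elim disjE; simp only: relA_Erel; simp add: rho_Erel[OF _ g] neg)
qed

lemma act_I:
  assumes a: "a \<in> {1..7}" and g: "goodV g" and gi: "\<forall>n. g n \<in> idealB"
  shows "act a g n \<in> (idealB :: (nat list \<Rightarrow> 'k::field) set)"
proof (cases "a = 7")
  case True
  show ?thesis
  proof (cases "n = 0")
    case True
    then show ?thesis unfolding \<open>a = 7\<close> act7 using delta_idealB[OF gi[rule_format, of n]] by simp
  next
    case False
    then show ?thesis unfolding \<open>a = 7\<close> act7
      using I_add[OF idealB_ideal gi[rule_format, of "n-1"] delta_idealB[OF gi[rule_format, of n]]] by simp
  qed
next
  case False
  then have "a \<in> {1..6}" using a by auto
  then show ?thesis unfolding actn7[OF False]
    using I_multL[OF idealB_ideal gi[rule_format, of n] gen_carrier] by simp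
qed

lemma actw_I:
  assumes u: "set u \<subseteq> {1..7}" and g: "goodV g" and gi: "\<forall>n. g n \<in> idealB"
  shows "actw u g n \<in> (idealB :: (nat list \<Rightarrow> 'k::field) set)"
  using u
proof (induction u arbitrary: n)
  case Nil then show ?case using gi by simp
next
  case (Cons a u)
  have su: "set u \<subseteq> {1..7}" using Cons.prems by simp
  show ?case using act_I[of a "actw u g" n] Cons su goodV_actw[OF su g] by simp
qed

lemma rho_I:
  assumes p: "p \<in> carrier (free_alg 7)" and g: "goodV g" and gi: "\<forall>n. g n \<in> idealB"
  shows "rho p g n \<in> (idealB :: (nat list \<Rightarrow> 'k::field) set)"
  unfolding rho_def'
  by (rule I_sum[OF idealB_ideal]) (use p carrier_fsupp carrier_words actw_I g gi in blast)+

definition Kset :: "(nat list \<Rightarrow> 'k::field) set" where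
  "Kset = {p \<in> carrier (free_alg 7). \<forall>g. goodV g \<longrightarrow> (\<forall>n. rho p g n \<in> idealB)}"

lemma Kset_ideal: "ideal (Kset :: (nat list \<Rightarrow> 'k::field) set) (free_alg 7)"
proof (rule ideal_faI)
  note IB = idealB_ideal[where 'k='k]
  show "Kset \<subseteq> carrier (free_alg 7)" unfolding Kset_def by auto
  show "(\<lambda>w. 0) \<in> (Kset :: (nat list \<Rightarrow> 'k::field) set)"
    unfolding Kset_def by (simp add: carrier_zero rho_zero I_zero[OF IB])
  show "(\<lambda>w. p w + q w) \<in> Kset" if "p \<in> Kset" "q \<in> Kset" for p q :: "nat list \<Rightarrow> 'k"
    using that unfolding Kset_def
    by (auto simp: rho_add carrier_fsupp intro!: fa_add_closed I_add[OF IB])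
  show "(\<lambda>w. - p w) \<in> Kset" if "p \<in> Kset" for p :: "nat list \<Rightarrow> 'k"
    using that unfolding Kset_def
    using rho_scale[of "-1" p] carrier_scale[of p 7 "-1"] I_neg[OF IB] by auto
  show "fa_mult x p \<in> Kset" if "p \<in> Kset" "x \<in> carrier (free_alg 7)" for p x :: "nat list \<Rightarrow> 'k"
  proof -
    have p: "p \<in> carrier (free_alg 7)" using that unfolding Kset_def by auto
    have "rho (fa_mult x p) g n \<in> idealB" if g: "goodV g" for g n
    proof -
      have "rho (fa_mult x p) g = rho x (rho p g)" by (rule rho_mult[OF \<open>x \<in> _\<close> p g])
      moreover have "rho x (rho p g) n \<in> idealB"
        using rho_I[OF \<open>x \<in> _\<close> goodV_rho[OF p g]] \<open>p \<in> Kset\<close> g unfolding Kset_def by auto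
      ultimately show ?thesis by simp
    qed
    then show ?thesis unfolding Kset_def using fa_mult_closed[OF that(2) p] by auto
  qed
  show "fa_mult p x \<in> Kset" if "p \<in> Kset" "x \<in> carrier (free_alg 7)" for p x :: "nat list \<Rightarrow> 'k"
  proof -
    have p: "p \<in> carrier (free_alg 7)" using that unfolding Kset_def by auto
    have "rho (fa_mult p x) g n \<in> idealB" if g: "goodV g" for g n
    proof -
      have "rho (fa_mult p x) g = rho p (rho x g)" by (rule rho_mult[OF p \<open>x \<in> _\<close> g])
      moreover have "rho p (rho x g) n \<in> idealB"
        using \<open>p \<in> Kset\<close> goodV_rho[OF \<open>x \<in> _\<close> g] unfolding Kset_def by auto
      ultimately show ?thesis by simp
    qed
    then show ?thesis unfolding Kset_def using fa_mult_closed[OF p that(2)] by auto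
  qed
qed

lemma idealA_Kset: "idealA \<subseteq> (Kset :: (nat list \<Rightarrow> 'k::field) set)"
  unfolding idealA_def
proof (rule ring.genideal_minimal[OF ring_fa Kset_ideal])
  show "relA ` {1..7} \<subseteq> (Kset :: (nat list \<Rightarrow> 'k::field) set)"
  proof
    fix r :: "nat list \<Rightarrow> 'k" assume "r \<in> relA ` {1..7}"
    then obtain j where j: "j \<in> {1..7}" and r: "r = relA j" by auto
    have rc: "r \<in> carrier (free_alg 7)" using relA_carrier j r by blast
    have "rho r g n \<in> (idealB :: (nat list \<Rightarrow> 'k::field) set)" if g: "goodV g" for g :: "'k V" and n
    proof (cases "j = 7")
      case True
      then have "rho r g = (\<lambda>n. fa_mult relB (g n))" using r relA_7[where 'a='k] rho6[OF relB_carrier] by simp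
      then show ?thesis using I_multR[OF idealB_ideal relB_in goodV_carrier[OF g]] by simp
    next
      case False
      then have "j \<in> {1..6}" using j by auto
      then show ?thesis using rho_relA[OF _ g] r I_zero[OF idealB_ideal] by simp
    qed
    then show "r \<in> Kset" unfolding Kset_def using rc by auto
  qed
qed


definition e0 :: "'k::field V" where
  "e0 = (\<lambda>n. if n = 0 then mon [] else (\<lambda>w. 0))"

definition Xp :: "nat \<Rightarrow> 'k::field V \<Rightarrow> 'k V" where
  "Xp i g = (act 7 ^^ i) g"

definition Mb :: "nat \<Rightarrow> 'k::field V \<Rightarrow> 'k V \<Rightarrow> 'k V" where
  "Mb N h g = (\<lambda>m w. \<Sum>i\<le>N. fa_mult (h i) (Xp i g m) w)"

abbreviation bnd :: "nat \<Rightarrow> 'k::field V \<Rightarrow> bool" where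
  "bnd N h \<equiv> \<forall>n>N. h n = (\<lambda>w. 0)"

lemma goodV_e0: "goodV e0"
  unfolding goodV_def e0_def by (auto intro: mon_carrier carrier_zero)

lemma goodV_Xp: "goodV g \<Longrightarrow> goodV (Xp i g)"
  unfolding Xp_def by (induction i) (auto intro: goodV_act)

lemma goodV_bnd: "goodV h \<Longrightarrow> \<exists>N. bnd N h"
  unfolding goodV_def by auto

lemma Xp_Suc: "Xp (Suc i) g = act 7 (Xp i g)"
  unfolding Xp_def by simp

lemma Mb_mono: "bnd N h \<Longrightarrow> N \<le> N' \<Longrightarrow> Mb N' h g = Mb N h g"
  unfolding Mb_def
proof (intro ext)
  fix m w assume b: "bnd N h" and NN: "N \<le> N'"
  show "(\<Sum>i\<le>N'. fa_mult (h i) (Xp i g m) w) = (\<Sum>i\<le>N. fa_mult (h i) (Xp i g m) w)"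
    by (rule sum.mono_neutral_right) (use b NN in \<open>auto simp: fa_mult_zeroL\<close>)
qed

lemma Mb_indep: "bnd N1 h \<Longrightarrow> bnd N2 h \<Longrightarrow> Mb N1 h g = Mb N2 h g"
  using Mb_mono[of N1 h "max N1 N2" g] Mb_mono[of N2 h "max N1 N2" g] by simp

lemma bnd_act: "bnd N h \<Longrightarrow> bnd (Suc N) (act a h)"
  by (cases "a = 7") (auto simp: act7 actn7 fa_mult_zeroR delta_def der_ext_zero)

lemma delta_zero: "delta (\<lambda>w. 0) = (\<lambda>w. 0 :: 'k::field)"
  by (simp add: delta_def der_ext_zero)

lemma delta_sum: "finite A \<Longrightarrow> (\<forall>i\<in>A. fsupp (f i)) \<Longrightarrow>
   delta (\<lambda>w. \<Sum>i\<in>A. f i w) = (\<lambda>w. \<Sum>i\<in>A. delta (f i) w :: 'k::field)"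
  unfolding delta_def using der_ext_sum[of A f D "\<lambda>_. 1" for D] by simp

lemma delta_mult: "fsupp p \<Longrightarrow> fsupp q \<Longrightarrow>
  delta (fa_mult p q) = (\<lambda>w. fa_mult (delta p) q w + fa_mult p (delta q) (w::nat list) :: 'k::field)"
  unfolding delta_def by (rule der_ext_mult)

lemma KL7:
  assumes h: "goodV h" and b: "bnd N h" and g: "goodV (g :: 'k::field V)"
  shows "act 7 (Mb N h g) = Mb (Suc N) (act 7 h) g"
proof (intro ext)
  fix m w
  let ?X = "\<lambda>i m. Xp i g m"
  have fsX: "fsupp (?X i m)" for i m using goodV_fsupp[OF goodV_Xp[OF g]] .
  have fsh: "fsupp (h i)" for i using goodV_fsupp[OF h] .
  have dM: "delta (Mb N h g m) = (\<lambda>w. \<Sum>i\<le>N. fa_mult (delta (h i)) (?X i m) w + fa_mult (h i) (delta (?X i m)) w)"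
  proof -
    have e1: "Mb N h g m = (\<lambda>w. \<Sum>i\<le>N. fa_mult (h i) (?X i m) w)" by (simp add: Mb_def)
    have e2: "delta (\<lambda>w. \<Sum>i\<le>N. fa_mult (h i) (?X i m) w) = (\<lambda>w. \<Sum>i\<le>N. delta (fa_mult (h i) (?X i m)) w)"
      by (rule delta_sum) (auto simp: fsupp_mult fsX fsh)
    show ?thesis unfolding e1 e2 by (simp add: delta_mult fsX fsh)
  qed
  have XS: "?X (Suc i) m = (\<lambda>w. (if m = 0 then 0 else ?X i (m-1) w) + delta (?X i m) w)" for i
    by (simp add: Xp_Suc act7)
  have L: "act 7 (Mb N h g) m w = (if m = 0 then 0 else (\<Sum>i\<le>N. fa_mult (h i) (?X i (m-1)) w))
       + (\<Sum>i\<le>N. fa_mult (delta (h i)) (?X i m) w) + (\<Sum>i\<le>N. fa_mult (h i) (delta (?X i m)) w)"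
    unfolding act7 dM by (simp add: Mb_def sum.distrib)
  have "Mb (Suc N) (act 7 h) g m w = (\<Sum>i\<le>Suc N. fa_mult (act 7 h i) (?X i m) w)"
    by (simp add: Mb_def)
  also have "\<dots> = fa_mult (act 7 h 0) (?X 0 m) w + (\<Sum>i\<le>N. fa_mult (act 7 h (Suc i)) (?X (Suc i) m) w)"
    by (rule sum.atMost_Suc_shift)
  also have "\<dots> = fa_mult (delta (h 0)) (?X 0 m) w
      + (\<Sum>i\<le>N. fa_mult (h i) (?X (Suc i) m) w + fa_mult (delta (h (Suc i))) (?X (Suc i) m) w)"
    by (simp add: act7 fa_mult_addL)
  also have "\<dots> = (\<Sum>i\<le>N. fa_mult (h i) (?X (Suc i) m) w)
      + (fa_mult (delta (h 0)) (?X 0 m) w + (\<Sum>i\<le>N. fa_mult (delta (h (Suc i))) (?X (Suc i) m) w))"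
    by (simp add: sum.distrib algebra_simps)
  also have "fa_mult (delta (h 0)) (?X 0 m) w + (\<Sum>i\<le>N. fa_mult (delta (h (Suc i))) (?X (Suc i) m) w)
      = (\<Sum>i\<le>Suc N. fa_mult (delta (h i)) (?X i m) w)"
    by (rule sum.atMost_Suc_shift[symmetric])
  also have "\<dots> = (\<Sum>i\<le>N. fa_mult (delta (h i)) (?X i m) w)"
    using b by (simp add: delta_zero fa_mult_zeroL)
  also have "(\<Sum>i\<le>N. fa_mult (h i) (?X (Suc i) m) w)
      = (if m = 0 then 0 else (\<Sum>i\<le>N. fa_mult (h i) (?X i (m-1)) w)) + (\<Sum>i\<le>N. fa_mult (h i) (delta (?X i m)) w)"
    by (simp add: XS fa_mult_addR fa_mult_zeroR sum.distrib)
  finally show "act 7 (Mb N h g) m w = Mb (Suc N) (act 7 h) g m w"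
    using L by (simp add: algebra_simps)
qed

lemma KLn7:
  assumes a: "a \<noteq> 7" and b: "bnd N h"
  shows "act a (Mb N h g) = Mb (Suc N) (act a h) (g :: 'k::field V)"
proof -
  have "act a (Mb N h g) = Mb N (act a h) g"
    unfolding actn7[OF a] Mb_def
    by (simp add: fa_mult_sumR' fa_mult_assoc)
  also have "\<dots> = Mb (Suc N) (act a h) g"
    using Mb_mono[of N "act a h" "Suc N" g] b a by (simp add: actn7 fa_mult_zeroR)
  finally show ?thesis .
qed

lemma KL:
  assumes h: "goodV h" and b: "bnd N h" and g: "goodV (g :: 'k::field V)"
  shows "act a (Mb N h g) = Mb (Suc N) (act a h) g"
  using KL7[OF h b g] KLn7[OF _ b] by (cases "a = 7") auto

lemma Mb_e0: "goodV g \<Longrightarrow> Mb N e0 g = (g :: 'k::field V)"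
  unfolding Mb_def e0_def
proof (intro ext)
  fix m w
  have "(\<Sum>i\<le>N. fa_mult (if i = 0 then mon [] else (\<lambda>w. 0)) (Xp i g m) w)
      = (\<Sum>i\<le>N. if i = 0 then fa_mult (mon []) (Xp i g m) w else 0)"
    by (rule sum.cong) (auto simp: fa_mult_zeroL)
  also have "\<dots> = g m w" by (simp add: Xp_def mon_Nil fa_mult_oneL)
  finally show "(\<Sum>i\<le>N. fa_mult (if i = 0 then mon [] else (\<lambda>w. 0)) (Xp i g m) w) = g m w" .
qed

lemma actw_M:
  assumes u: "set u \<subseteq> {1..7}" and g: "goodV (g :: 'k::field V)"
  shows "bnd N (actw u (e0::'k V)) \<Longrightarrow> actw u g = Mb N (actw u e0) g"
  using u
proof (induction u arbitrary: N)
  case Nil then show ?case using Mb_e0[OF g, of N] by (simp only: actw_Nil)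
next
  case (Cons a u)
  have su: "set u \<subseteq> {1..7}" using Cons.prems by simp
  have gh: "goodV (actw u (e0::'k V))" by (rule goodV_actw[OF su goodV_e0])
  from goodV_bnd[OF gh] obtain N0 where N0: "bnd N0 (actw u (e0::'k V))" by blast
  have "actw (a # u) g = act a (Mb N0 (actw u e0) g)"
    by (simp only: actw_Cons Cons.IH[OF N0 su])
  also have "\<dots> = Mb (Suc N0) (act a (actw u e0)) g" by (rule KL[OF gh N0 g])
  also have "\<dots> = Mb N (act a (actw u e0)) g"
    by (rule Mb_indep[OF bnd_act[OF N0] Cons.prems(1)[unfolded actw_Cons]])
  finally show ?case by simp
qed

lemma Mb_lin: "finite A \<Longrightarrow> Mb N (\<lambda>n w. \<Sum>j\<in>A. c j * h j n w) g = (\<lambda>m w. \<Sum>j\<in>A. c j * Mb N (h j) g m w)"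
  unfolding Mb_def
  by (intro ext) (simp add: fa_mult_sumL sum_distrib_left, rule sum.swap)

lemma rho_M:
  assumes p: "p \<in> carrier (free_alg 7)" and g: "goodV (g :: 'k::field V)"
  shows "\<exists>N. bnd N (rho p e0) \<and> rho p g = Mb N (rho p e0) g"
proof -
  let ?S = "{u. p u \<noteq> 0}"
  have fS: "finite ?S" using p carrier_fsupp by blast
  have su: "set u \<subseteq> {1..7}" if "u \<in> ?S" for u using that carrier_words[OF p] by blast
  have "\<forall>u\<in>?S. \<exists>N. bnd N (actw u (e0::'k V))"
    using su goodV_actw goodV_e0 goodV_bnd by blast
  then obtain Nf where Nf: "\<forall>u\<in>?S. bnd (Nf u) (actw u (e0::'k V))" by metis
  define N where "N = Max (Nf ` ?S)"
  have bN: "bnd N (actw u (e0::'k V))" if "u \<in> ?S" for u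
  proof -
    have le: "Nf u \<le> N" unfolding N_def using fS that by auto
    show ?thesis
    proof (intro allI impI)
      fix n assume "n > N"
      then have "n > Nf u" using le by linarith
      then show "actw u (e0::'k V) n = (\<lambda>w. 0)" using Nf that by auto
    qed
  qed
  have re: "rho p e0 = (\<lambda>n w. \<Sum>u\<in>?S. p u * actw u e0 n w)" by (rule rho_def')
  have b: "bnd N (rho p e0)" unfolding re using bN by (auto simp: fun_eq_iff)
  have "rho p g = (\<lambda>n w. \<Sum>u\<in>?S. p u * Mb N (actw u e0) g n w)"
    unfolding rho_def' using actw_M[OF su g bN] by simp
  also have "\<dots> = Mb N (rho p e0) g"
    unfolding re by (simp add: Mb_lin[OF fS])
  finally show ?thesis using b by blast
qed


lemma delta_pow_carrier: "p \<in> carrier (free_alg 6) \<Longrightarrow> (delta ^^ k) p \<in> carrier (free_alg 6 :: (nat list \<Rightarrow> 'k::field) ring)"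
  by (induction k) (auto intro: delta_carrier)

lemma Xp_formula:
  assumes g: "goodV (g :: 'k::field V)"
  shows "Xp i g m = (\<lambda>w. \<Sum>l\<le>i. (if l \<le> m then of_nat (i choose l) else 0) * (delta ^^ (i - l)) (g (m - l)) w)"
proof (induction i arbitrary: m)
  case 0 then show ?case by (simp add: Xp_def)
next
  case (Suc i)
  define D where "D = (\<lambda>k j. (delta ^^ k) (g j))"
  define c where "c = (\<lambda>i m l. (if l \<le> m then of_nat (i choose l) else (0::'k)))"
  have fsD: "fsupp (D k j)" for k j unfolding D_def
    by (rule carrier_fsupp[OF delta_pow_carrier[OF goodV_carrier[OF g]]])
  have IH: "Xp i g m' = (\<lambda>w. \<Sum>l\<le>i. c i m' l * D (i - l) (m' - l) w)" for m'
    using Suc.IH unfolding c_def D_def by simp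
  have dX: "delta (Xp i g m) = (\<lambda>w. \<Sum>l\<le>i. c i m l * D (Suc i - l) (m - l) w)"
  proof -
    have "delta (Xp i g m) = (\<lambda>w. \<Sum>l\<le>i. c i m l * delta (D (i - l) (m - l)) w)"
      unfolding IH delta_def by (rule der_ext_sum) (auto simp: fsD)
    also have "\<dots> = (\<lambda>w. \<Sum>l\<le>i. c i m l * D (Suc i - l) (m - l) w)"
      by (intro ext sum.cong refl) (simp add: D_def Suc_diff_le)
    finally show ?thesis .
  qed
  have A: "(if m = 0 then 0 else Xp i g (m - 1) w) = (\<Sum>l\<le>i. (if Suc l \<le> m then of_nat (i choose l) else 0) * D (i - l) (m - Suc l) w)" for w
  proof (cases "m = 0")
    case True then show ?thesis by simp
  next
    case False
    then show ?thesis unfolding IH c_def by (simp, intro sum.cong refl) auto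
  qed
  have B: "(\<Sum>l\<le>i. c i m l * D (Suc i - l) (m - l) w) = (\<Sum>l\<le>Suc i. c i m l * D (Suc i - l) (m - l) w)" for w
    by (simp add: c_def binomial_eq_0)
  have B': "(\<Sum>l\<le>Suc i. c i m l * D (Suc i - l) (m - l) w)
      = D (Suc i) m w + (\<Sum>l\<le>i. (if Suc l \<le> m then of_nat (i choose Suc l) else 0) * D (i - l) (m - Suc l) w)" for w
    by (subst sum.atMost_Suc_shift) (simp add: c_def)
  have T: "(\<Sum>l\<le>Suc i. c (Suc i) m l * D (Suc i - l) (m - l) w)
      = D (Suc i) m w + (\<Sum>l\<le>i. (if Suc l \<le> m then of_nat (i choose l) else 0) * D (i - l) (m - Suc l) w)
        + (\<Sum>l\<le>i. (if Suc l \<le> m then of_nat (i choose Suc l) else 0) * D (i - l) (m - Suc l) w)" for w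
  proof -
    have cS: "c (Suc i) m (Suc l) = (if Suc l \<le> m then of_nat (i choose l) else 0) + (if Suc l \<le> m then of_nat (i choose Suc l) else 0)" for l
      unfolding c_def by simp
    have c0: "c (Suc i) m 0 = 1" unfolding c_def by simp
    show ?thesis
      by (subst sum.atMost_Suc_shift) (simp only: cS c0 ring_distribs sum.distrib diff_Suc_Suc mult_1 add.assoc diff_zero)
  qed
  show ?case
  proof (rule ext)
    fix w
    have "Xp (Suc i) g m w = (if m = 0 then 0 else Xp i g (m - 1) w) + delta (Xp i g m) w"
      by (simp add: Xp_Suc act7)
    also have "\<dots> = (\<Sum>l\<le>i. (if Suc l \<le> m then of_nat (i choose l) else 0) * D (i - l) (m - Suc l) w)
       + (D (Suc i) m w + (\<Sum>l\<le>i. (if Suc l \<le> m then of_nat (i choose Suc l) else 0) * D (i - l) (m - Suc l) w))"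
      unfolding A dX B B' by simp
    also have "\<dots> = (\<Sum>l\<le>Suc i. c (Suc i) m l * D (Suc i - l) (m - l) w)"
      unfolding T by (simp add: algebra_simps)
    finally show "Xp (Suc i) g m w = (\<Sum>l\<le>Suc i. (if l \<le> m then of_nat (Suc i choose l) else 0) * (delta ^^ (Suc i - l)) (g (m - l)) w)"
      by (simp add: c_def D_def)
  qed
qed


definition x7p :: "nat \<Rightarrow> nat list \<Rightarrow> 'k::field" where
  "x7p i = mon (replicate i 7)"

definition Nmap :: "nat \<Rightarrow> 'k::field V \<Rightarrow> nat list \<Rightarrow> 'k" where
  "Nmap N h = (\<lambda>w. \<Sum>i\<le>N. fa_mult (h i) (x7p i) w)"

definition ei :: "nat \<Rightarrow> 'k::field V" where
  "ei i = (\<lambda>n. if n = i then mon [] else (\<lambda>w. 0))"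

lemma x7p_carrier: "x7p i \<in> carrier (free_alg 7 :: (nat list \<Rightarrow> 'k::field) ring)"
  unfolding x7p_def by (rule mon_carrier) auto

lemma x7p_Suc: "x7p (Suc i) = fa_mult (gen 7) (x7p i :: nat list \<Rightarrow> 'k::field)"
  unfolding x7p_def gen_mon by (simp add: mon_mult)

lemma delta_mon_Nil: "delta (mon []) = (\<lambda>w. 0 :: 'k::field)"
  unfolding delta_def by (simp add: der_ext_mon der_word_Nil)

lemma act7_ei: "act 7 (ei i) = (ei (Suc i) :: 'k::field V)"
  unfolding act7 ei_def
  by (intro ext) (auto simp: delta_mon_Nil delta_zero)

lemma actw_rep: "actw (replicate i 7) e0 = (ei i :: 'k::field V)"
proof (induction i)
  case 0 then show ?case by (simp add: e0_def ei_def)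
next
  case (Suc i) then show ?case by (simp add: act7_ei)
qed

lemma Nmap_carrier: "goodV h \<Longrightarrow> Nmap N h \<in> carrier (free_alg 7 :: (nat list \<Rightarrow> 'k::field) ring)"
  unfolding Nmap_def
  by (intro carrier_sum' ballI finite_atMost fa_mult_closed x7p_carrier carrier_mono[of 6 7] goodV_carrier) auto

lemma Nmap_mono: "bnd N h \<Longrightarrow> N \<le> N' \<Longrightarrow> Nmap N' h = Nmap N h"
  unfolding Nmap_def
  by (intro ext sum.mono_neutral_right) (auto simp: fa_mult_zeroL)

lemma Nmap_indep: "bnd N1 h \<Longrightarrow> bnd N2 h \<Longrightarrow> Nmap N1 h = Nmap N2 h"
  using Nmap_mono[of N1 h "max N1 N2"] Nmap_mono[of N2 h "max N1 N2"] by simp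

lemma Nmap_lin: "finite A \<Longrightarrow> Nmap N (\<lambda>n w. \<Sum>j\<in>A. c j * h j n w) = (\<lambda>w. \<Sum>j\<in>A. c j * Nmap N (h j) w)"
  unfolding Nmap_def
  by (intro ext) (simp add: fa_mult_sumL sum_distrib_left, rule sum.swap)

lemma rho_sum': "finite A \<Longrightarrow> (\<forall>i\<in>A. fsupp (f i)) \<Longrightarrow>
   rho (\<lambda>w. \<Sum>i\<in>A. f i w) g = (\<lambda>n w. \<Sum>i\<in>A. rho (f i) g n w)"
  using rho_sum[of A f "\<lambda>_. 1" g] by simp

lemma rho_Nmap:
  assumes h: "goodV (h :: 'k::field V)" and b: "bnd N h"
  shows "rho (Nmap N h) e0 = h"
proof -
  have hc: "h i \<in> carrier (free_alg 6)" for i by (rule goodV_carrier[OF h])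
  have r: "rho (fa_mult (h i) (x7p i)) e0 = (\<lambda>n. fa_mult (h i) (ei i n))" for i
  proof -
    have "rho (fa_mult (h i) (x7p i)) e0 = rho (h i) (rho (x7p i) e0)"
      by (rule rho_mult[OF carrier_mono[of 6 7, OF _ hc] x7p_carrier goodV_e0]) simp
    also have "rho (x7p i) e0 = ei i" unfolding x7p_def rho_mon actw_rep ..
    finally show ?thesis by (simp add: rho6[OF hc])
  qed
  have "rho (Nmap N h) e0 = (\<lambda>n w. \<Sum>i\<le>N. rho (fa_mult (h i) (x7p i)) e0 n w)"
    unfolding Nmap_def
    by (rule rho_sum') (auto intro: fsupp_mult goodV_fsupp[OF h] carrier_fsupp[OF x7p_carrier])
  also have "\<dots> = (\<lambda>n w. \<Sum>i\<le>N. if i = n then h n w else 0)"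
    unfolding r ei_def
    by (intro ext sum.cong refl) (auto simp: fa_mult_zeroR mon_Nil fa_mult_oneR)
  also have "\<dots> = h"
    using b by (auto simp: fun_eq_iff not_le)
  finally show ?thesis .
qed

definition Ecomm :: "(nat list \<Rightarrow> 'k::field) \<Rightarrow> nat list \<Rightarrow> 'k" where
  "Ecomm q = (\<lambda>w. fa_mult (gen 7) q w - fa_mult q (gen 7) w - delta q w)"

lemma Erel_in: "a \<in> {1..6} \<Longrightarrow> Erel a \<in> (idealA :: (nat list \<Rightarrow> 'k::field) set)"
proof -
  assume a: "a \<in> {1..6}"
  note IA = idealA_ideal[where 'k='k]
  have r: "relA j \<in> (idealA :: (nat list \<Rightarrow> 'k::field) set)" if "j \<in> {1..7}" for j
    using relA_in[OF that] .
  have n: "(\<lambda>w. - (\<lambda>w. - Erel b w) w) = Erel b" for b :: nat by simp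
  have "a = 1 \<or> a = 2 \<or> a = 3 \<or> a = 4 \<or> a = 5 \<or> a = 6" using a by auto
  then show ?thesis
  proof (elim disjE)
    assume "a = 1" then show ?thesis using r[of 6] unfolding relA_Erel by simp
  next
    assume "a = 2" then show ?thesis using I_neg[OF IA r[of 5]] unfolding relA_Erel by simp
  next
    assume "a = 3" then show ?thesis using I_neg[OF IA r[of 4]] unfolding relA_Erel by simp
  next
    assume "a = 4" then show ?thesis using r[of 3] unfolding relA_Erel by simp
  next
    assume "a = 5" then show ?thesis using r[of 2] unfolding relA_Erel by simp
  next
    assume "a = 6" then show ?thesis using I_neg[OF IA r[of 1]] unfolding relA_Erel by simp
  qed
qed

lemma Ecomm_word: "set u \<subseteq> {1..6} \<Longrightarrow> Ecomm (mon u) \<in> (idealA :: (nat list \<Rightarrow> 'k::field) set)"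
proof (induction u)
  note IA = idealA_ideal[where 'k='k]
  case Nil
  have "Ecomm (mon [] :: nat list \<Rightarrow> 'k) = (\<lambda>w. 0)"
    unfolding Ecomm_def delta_mon_Nil by (simp add: mon_Nil fa_mult_oneL fa_mult_oneR)
  then show ?case using I_zero[OF IA] by simp
next
  note IA = idealA_ideal[where 'k='k]
  case (Cons a u)
  have a: "a \<in> {1..6}" and su: "set u \<subseteq> {1..6}" using Cons.prems by auto
  have mC: "mon (a # u) = fa_mult (gen a) (mon u :: nat list \<Rightarrow> 'k)"
    by (simp add: gen_mon mon_mult)
  have dC: "delta (mon (a # u) :: nat list \<Rightarrow> 'k) = (\<lambda>w. fa_mult (delta_gen a) (mon u) w + fa_mult (gen a) (delta (mon u)) w)"
    unfolding delta_def der_ext_mon der_word_Cons ..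
  have eq: "Ecomm (mon (a # u) :: nat list \<Rightarrow> 'k) = (\<lambda>w. fa_mult (Erel a) (mon u) w + fa_mult (gen a) (Ecomm (mon u)) w)"
    unfolding Ecomm_def Erel_def comm_def dC
    by (simp add: mC fa_mult_diffL fa_mult_diffR fa_mult_addL fa_mult_addR fa_mult_assoc algebra_simps)
  have "fa_mult (Erel a) (mon u) \<in> (idealA :: (nat list \<Rightarrow> 'k) set)"
    by (rule I_multR[OF IA Erel_in[OF a]]) (rule mon_carrier, use su in auto)
  moreover have "fa_mult (gen a) (Ecomm (mon u)) \<in> (idealA :: (nat list \<Rightarrow> 'k) set)"
    by (rule I_multL[OF IA Cons.IH[OF su]]) (rule gen_carrier, use a in auto)
  ultimately show ?case unfolding eq by (rule I_add[OF IA])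
qed

lemma Ecomm_lin: "finite A \<Longrightarrow> (\<forall>i\<in>A. fsupp (f i)) \<Longrightarrow>
  Ecomm (\<lambda>w. \<Sum>i\<in>A. c i * f i w) = (\<lambda>w. \<Sum>i\<in>A. c i * Ecomm (f i) w :: 'k::field)"
  unfolding Ecomm_def delta_def
  by (simp add: der_ext_sum fa_mult_sumL fa_mult_sumR sum_subtractf right_diff_distrib)

lemma Ecomm_in: "q \<in> carrier (free_alg 6) \<Longrightarrow> Ecomm q \<in> (idealA :: (nat list \<Rightarrow> 'k::field) set)"
proof -
  assume q: "q \<in> carrier (free_alg 6)"
  have fq: "fsupp q" using q by (rule carrier_fsupp)
  have "Ecomm q = Ecomm (\<lambda>x. \<Sum>v\<in>{v. q v \<noteq> 0}. q v * mon v x)"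
    by (subst lext_as_fun[OF fq]) (rule refl)
  also have "\<dots> = (\<lambda>w. \<Sum>v\<in>{v. q v \<noteq> 0}. q v * Ecomm (mon v) w)"
    by (rule Ecomm_lin) (auto simp: fq fsupp_mon)
  also have "\<dots> \<in> idealA"
    by (rule I_sum[OF idealA_ideal]) (use fq Ecomm_word carrier_words[OF q] in auto)
  finally show ?thesis .
qed


lemma CC7:
  assumes h: "goodV (h :: 'k::field V)" and b: "bnd N h"
  shows "(\<lambda>w. fa_mult (gen 7) (Nmap N h) w - Nmap (Suc N) (act 7 h) w) \<in> (idealA :: (nat list \<Rightarrow> 'k) set)"
proof -
  note IA = idealA_ideal[where 'k='k]
  let ?x = "\<lambda>i. x7p i :: nat list \<Rightarrow> 'k"
  have eq: "(\<lambda>w. fa_mult (gen 7) (Nmap N h) w - Nmap (Suc N) (act 7 h) w) = (\<lambda>w. \<Sum>i\<le>N. fa_mult (Ecomm (h i)) (?x i) w)"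
  proof (rule ext)
    fix w
    have "Nmap (Suc N) (act 7 h) w = fa_mult (act 7 h 0) (?x 0) w + (\<Sum>i\<le>N. fa_mult (act 7 h (Suc i)) (?x (Suc i)) w)"
      unfolding Nmap_def by (rule sum.atMost_Suc_shift)
    also have "\<dots> = fa_mult (delta (h 0)) (?x 0) w + (\<Sum>i\<le>N. fa_mult (h i) (?x (Suc i)) w + fa_mult (delta (h (Suc i))) (?x (Suc i)) w)"
      by (simp add: act7 fa_mult_addL)
    also have "\<dots> = (\<Sum>i\<le>N. fa_mult (h i) (?x (Suc i)) w) + (fa_mult (delta (h 0)) (?x 0) w + (\<Sum>i\<le>N. fa_mult (delta (h (Suc i))) (?x (Suc i)) w))"
      by (simp add: sum.distrib algebra_simps)
    also have "fa_mult (delta (h 0)) (?x 0) w + (\<Sum>i\<le>N. fa_mult (delta (h (Suc i))) (?x (Suc i)) w) = (\<Sum>i\<le>Suc N. fa_mult (delta (h i)) (?x i) w)"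
      by (rule sum.atMost_Suc_shift[symmetric])
    also have "\<dots> = (\<Sum>i\<le>N. fa_mult (delta (h i)) (?x i) w)"
      using b by (simp add: delta_zero fa_mult_zeroL)
    finally have 1: "Nmap (Suc N) (act 7 h) w = (\<Sum>i\<le>N. fa_mult (h i) (?x (Suc i)) w) + (\<Sum>i\<le>N. fa_mult (delta (h i)) (?x i) w)" .
    have 2: "fa_mult (gen 7) (Nmap N h) w = (\<Sum>i\<le>N. fa_mult (gen 7) (fa_mult (h i) (?x i)) w)"
      unfolding Nmap_def by (simp add: fa_mult_sumR')
    have 3: "fa_mult (Ecomm (h i)) (?x i) w = fa_mult (gen 7) (fa_mult (h i) (?x i)) w - fa_mult (h i) (?x (Suc i)) w - fa_mult (delta (h i)) (?x i) w" for i
      unfolding Ecomm_def x7p_Suc by (simp add: fa_mult_diffL fa_mult_assoc)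
    show "fa_mult (gen 7) (Nmap N h) w - Nmap (Suc N) (act 7 h) w = (\<Sum>i\<le>N. fa_mult (Ecomm (h i)) (?x i) w)"
      unfolding 1 2 3 by (simp add: sum_subtractf)
  qed
  have "(\<lambda>w. \<Sum>i\<le>N. 1 * fa_mult (Ecomm (h i)) (?x i) w) \<in> idealA"
    by (rule I_sum[OF IA]) (auto intro: I_multR[OF IA] Ecomm_in goodV_carrier[OF h] x7p_carrier)
  then show ?thesis unfolding eq by simp
qed

lemma CC:
  assumes h: "goodV (h :: 'k::field V)" and b: "bnd N h" and a: "a \<in> {1..7}"
  shows "(\<lambda>w. fa_mult (gen a) (Nmap N h) w - Nmap (Suc N) (act a h) w) \<in> (idealA :: (nat list \<Rightarrow> 'k) set)"
proof (cases "a = 7")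
  case True then show ?thesis using CC7[OF h b] by simp
next
  case False
  have "fa_mult (gen a) (Nmap N h) = Nmap N (act a h)"
    unfolding Nmap_def actn7[OF False] by (simp add: fa_mult_sumR' fa_mult_assoc)
  also have "\<dots> = Nmap (Suc N) (act a h)"
    using Nmap_mono[of N "act a h" "Suc N"] b by (simp add: actn7[OF False] fa_mult_zeroR)
  finally show ?thesis using I_zero[OF idealA_ideal] by simp
qed

lemma N2_word:
  assumes u: "set u \<subseteq> {1..7}"
  shows "bnd N (actw u (e0::'k::field V)) \<Longrightarrow> (\<lambda>w. mon u w - Nmap N (actw u e0) w) \<in> (idealA :: (nat list \<Rightarrow> 'k) set)"
  using u
proof (induction u arbitrary: N)
  note IA = idealA_ideal[where 'k='k]
  case Nil
  have "Nmap N (e0::'k V) = mon []"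
    unfolding Nmap_def e0_def
  proof (rule ext)
    fix w
    have "(\<Sum>i\<le>N. fa_mult (if i = 0 then mon [] else (\<lambda>w. 0)) (x7p i) w) = (\<Sum>i\<le>N. if i = 0 then fa_mult (mon []) (x7p i) w else (0::'k))"
      by (rule sum.cong) (auto simp: fa_mult_zeroL)
    also have "\<dots> = mon [] w" by (simp add: x7p_def mon_Nil fa_mult_oneL)
    finally show "(\<Sum>i\<le>N. fa_mult (if i = 0 then mon [] else (\<lambda>w. 0)) (x7p i) w) = (mon [] w :: 'k)" .
  qed
  then show ?case using I_zero[OF IA] by simp
next
  note IA = idealA_ideal[where 'k='k]
  case (Cons a u)
  have su: "set u \<subseteq> {1..7}" and a: "a \<in> {1..7}" using Cons.prems(2) by auto
  have gh: "goodV (actw u (e0::'k V))" by (rule goodV_actw[OF su goodV_e0])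
  from goodV_bnd[OF gh] obtain N0 where N0: "bnd N0 (actw u (e0::'k V))" by blast
  let ?h = "actw u (e0::'k V)"
  have IH: "(\<lambda>w. mon u w - Nmap N0 ?h w) \<in> idealA" by (rule Cons.IH[OF N0 su])
  have NN: "Nmap N (actw (a # u) e0) = Nmap (Suc N0) (act a ?h)"
    using Nmap_indep[OF Cons.prems(1)[unfolded actw_Cons] bnd_act[OF N0]] by simp
  have ga: "gen a \<in> carrier (free_alg 7 :: (nat list \<Rightarrow> 'k) ring)" using a by (rule gen_carrier)
  have X: "fa_mult (gen a) (\<lambda>w. mon u w - Nmap N0 ?h w) \<in> idealA" by (rule I_multL[OF IA IH ga])
  have Y: "(\<lambda>w. fa_mult (gen a) (Nmap N0 ?h) w - Nmap (Suc N0) (act a ?h) w) \<in> idealA"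
    by (rule CC[OF gh N0 a])
  have "(\<lambda>w. mon (a # u) w - Nmap N (actw (a # u) e0) w)
      = (\<lambda>w. fa_mult (gen a) (\<lambda>w. mon u w - Nmap N0 ?h w) w + (fa_mult (gen a) (Nmap N0 ?h) w - Nmap (Suc N0) (act a ?h) w))"
    unfolding NN by (simp add: fa_mult_diffR gen_mon mon_mult)
  then show ?case using I_add[OF IA X Y] by simp
qed

lemma N2:
  assumes p: "p \<in> carrier (free_alg 7)" and b: "bnd N (rho p (e0::'k::field V))"
  shows "(\<lambda>w. p w - Nmap N (rho p e0) w) \<in> (idealA :: (nat list \<Rightarrow> 'k) set)"
proof -
  let ?S = "{u. p u \<noteq> 0}"
  have fS: "finite ?S" using p carrier_fsupp by blast
  have fp: "fsupp p" using p carrier_fsupp by blast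
  have su: "set u \<subseteq> {1..7}" if "u \<in> ?S" for u using that carrier_words[OF p] by blast
  have "\<forall>u\<in>?S. \<exists>N. bnd N (actw u (e0::'k V))"
    using su goodV_actw goodV_e0 goodV_bnd by blast
  then obtain Nf where Nf: "\<forall>u\<in>?S. bnd (Nf u) (actw u (e0::'k V))" by metis
  define M where "M = Max (Nf ` ?S)"
  have bM: "bnd M (actw u (e0::'k V))" if "u \<in> ?S" for u
  proof -
    have le: "Nf u \<le> M" unfolding M_def using fS that by auto
    show ?thesis
    proof (intro allI impI)
      fix n assume "n > M"
      then have "n > Nf u" using le by linarith
      then show "actw u (e0::'k V) n = (\<lambda>w. 0)" using Nf that by auto
    qed
  qed
  have re: "rho p e0 = (\<lambda>n w. \<Sum>u\<in>?S. p u * actw u e0 n w)" by (rule rho_def')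
  have bM': "bnd M (rho p e0)" unfolding re using bM by (auto simp: fun_eq_iff)
  have "(\<lambda>w. p w - Nmap M (rho p e0) w) = (\<lambda>w. \<Sum>u\<in>?S. p u * (mon u w - Nmap M (actw u e0) w))"
  proof -
    have NM: "Nmap M (rho p e0) = (\<lambda>w. \<Sum>u\<in>?S. p u * Nmap M (actw u e0) w)"
      unfolding re by (rule Nmap_lin[OF fS])
    have pw: "p w = (\<Sum>u\<in>?S. p u * mon u w)" for w
      using lext_repr[OF fp, of w] unfolding lext_def by (rule sym)
    show ?thesis
      apply (rule ext)
      apply (subst pw)
      apply (simp only: NM sum_subtractf right_diff_distrib)
      done
  qed
  also have "\<dots> \<in> idealA"
    by (rule I_sum[OF idealA_ideal fS]) (use N2_word su bM in blast)
  finally show ?thesis using Nmap_indep[OF b bM'] by simp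
qed


lemma rcoset_fa: "I +>\<^bsub>free_alg n\<^esub> p = {(\<lambda>w. h w + p w) | h. h \<in> I} "
  unfolding a_r_coset_def' by (auto simp: fa_simps)

lemma carrier_quot: "carrier (free_alg n Quot I) = {I +>\<^bsub>free_alg n\<^esub> p | p. p \<in> carrier (free_alg n :: (nat list \<Rightarrow> 'k::field) ring)}"
  unfolding FactRing_def A_RCOSETS_def' by auto

context
  fixes I :: "(nat list \<Rightarrow> 'k::field) set" and n :: nat
  assumes I: "ideal I (free_alg n)"
begin

lemma coset_eq:
  assumes p: "p \<in> carrier (free_alg n)" and q: "q \<in> carrier (free_alg n)"
  shows "(I +>\<^bsub>free_alg n\<^esub> p = I +>\<^bsub>free_alg n\<^esub> q) \<longleftrightarrow> (\<lambda>w. p w - q w) \<in> I"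
proof
  assume eq: "I +>\<^bsub>free_alg n\<^esub> p = I +>\<^bsub>free_alg n\<^esub> q"
  have "p \<in> I +>\<^bsub>free_alg n\<^esub> p" unfolding rcoset_fa using I_zero[OF I] by force
  then have "p \<in> I +>\<^bsub>free_alg n\<^esub> q" using eq by simp
  then obtain h where h: "h \<in> I" "p = (\<lambda>w. h w + q w)" unfolding rcoset_fa by auto
  then show "(\<lambda>w. p w - q w) \<in> I" by simp
next
  assume d: "(\<lambda>w. p w - q w) \<in> I"
  have d': "(\<lambda>w. q w - p w) \<in> I" using I_neg[OF I d] by simp
  show "I +>\<^bsub>free_alg n\<^esub> p = I +>\<^bsub>free_alg n\<^esub> q"
  proof
    show "I +>\<^bsub>free_alg n\<^esub> p \<subseteq> I +>\<^bsub>free_alg n\<^esub> q"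
    proof
      fix x assume "x \<in> I +>\<^bsub>free_alg n\<^esub> p"
      then obtain h where h: "h \<in> I" "x = (\<lambda>w. h w + p w)" unfolding rcoset_fa by auto
      have "(\<lambda>w. h w + (p w - q w)) \<in> I" using I_add[OF I h(1) d] .
      moreover have "x = (\<lambda>w. (h w + (p w - q w)) + q w)" using h by auto
      ultimately show "x \<in> I +>\<^bsub>free_alg n\<^esub> q" unfolding rcoset_fa
        by (intro CollectI exI[of _ "\<lambda>w. h w + (p w - q w)"]) auto
    qed
    show "I +>\<^bsub>free_alg n\<^esub> q \<subseteq> I +>\<^bsub>free_alg n\<^esub> p"
    proof
      fix x assume "x \<in> I +>\<^bsub>free_alg n\<^esub> q"
      then obtain h where h: "h \<in> I" "x = (\<lambda>w. h w + q w)" unfolding rcoset_fa by auto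
      have "(\<lambda>w. h w + (q w - p w)) \<in> I" using I_add[OF I h(1) d'] .
      moreover have "x = (\<lambda>w. (h w + (q w - p w)) + p w)" using h by auto
      ultimately show "x \<in> I +>\<^bsub>free_alg n\<^esub> p" unfolding rcoset_fa
        by (intro CollectI exI[of _ "\<lambda>w. h w + (q w - p w)"]) auto
    qed
  qed
qed

lemma coset_zero: "I +>\<^bsub>free_alg n\<^esub> (\<lambda>w. 0) = I"
  unfolding rcoset_fa by auto

lemma coset_is_zero: "p \<in> carrier (free_alg n) \<Longrightarrow> (I +>\<^bsub>free_alg n\<^esub> p = I) \<longleftrightarrow> p \<in> I"
  using coset_eq[OF _ carrier_zero, of p] coset_zero by simp

lemma coset_some:
  assumes C: "C \<in> carrier (free_alg n Quot I)"
  shows "(SOME p. p \<in> C) \<in> carrier (free_alg n)" "I +>\<^bsub>free_alg n\<^esub> (SOME p. p \<in> C) = C"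
proof -
  obtain q where q: "q \<in> carrier (free_alg n)" "C = I +>\<^bsub>free_alg n\<^esub> q" using C carrier_quot by blast
  have "q \<in> C" unfolding q rcoset_fa using I_zero[OF I] by force
  then have s: "(SOME p. p \<in> C) \<in> C" by (rule someI[of "\<lambda>p. p \<in> C" q])
  then obtain h where h: "h \<in> I" "(SOME p. p \<in> C) = (\<lambda>w. h w + q w)" unfolding q rcoset_fa by auto
  show sc: "(SOME p. p \<in> C) \<in> carrier (free_alg n)"
    unfolding h(2) using fa_add_closed[OF subsetD[OF I_sub[OF I] h(1)] q(1)] .
  show "I +>\<^bsub>free_alg n\<^esub> (SOME p. p \<in> C) = C"
  proof -
    have "I +>\<^bsub>free_alg n\<^esub> (SOME p. p \<in> C) = I +>\<^bsub>free_alg n\<^esub> q"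
      using coset_eq[OF sc q(1)] h by simp
    then show ?thesis using q(2) by simp
  qed
qed

lemma pi_hom: "(\<lambda>p. I +>\<^bsub>free_alg n\<^esub> p) \<in> ring_hom (free_alg n) (free_alg n Quot I)"
  using ideal.rcos_ring_hom[OF I] by simp

lemma pi_carrier: "p \<in> carrier (free_alg n) \<Longrightarrow> I +>\<^bsub>free_alg n\<^esub> p \<in> carrier (free_alg n Quot I)"
  using carrier_quot by blast

lemma pi_add: "p \<in> carrier (free_alg n) \<Longrightarrow> q \<in> carrier (free_alg n) \<Longrightarrow>
  I +>\<^bsub>free_alg n\<^esub> (\<lambda>w. p w + q w) = (I +>\<^bsub>free_alg n\<^esub> p) \<oplus>\<^bsub>free_alg n Quot I\<^esub> (I +>\<^bsub>free_alg n\<^esub> q)"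
  using ring_hom_add[OF pi_hom] by (simp add: fa_simps)

lemma pi_mult: "p \<in> carrier (free_alg n) \<Longrightarrow> q \<in> carrier (free_alg n) \<Longrightarrow>
  I +>\<^bsub>free_alg n\<^esub> (fa_mult p q) = (I +>\<^bsub>free_alg n\<^esub> p) \<otimes>\<^bsub>free_alg n Quot I\<^esub> (I +>\<^bsub>free_alg n\<^esub> q)"
  using ring_hom_mult[OF pi_hom] by (simp add: fa_simps)

lemma pi_one: "I +>\<^bsub>free_alg n\<^esub> (mon []) = \<one>\<^bsub>free_alg n Quot I\<^esub>"
  using ring_hom_one[OF pi_hom] by (simp add: fa_simps mon_Nil)

lemma quot_zero: "\<zero>\<^bsub>free_alg n Quot I\<^esub> = I"
  by (simp add: FactRing_def)

lemma quot_ring: "ring (free_alg n Quot I)"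
  by (rule ideal.quotient_is_ring[OF I])

lemma pi_finsum: "finite A \<Longrightarrow> (\<forall>a\<in>A. F a \<in> carrier (free_alg n)) \<Longrightarrow>
  finsum (free_alg n Quot I) (\<lambda>a. I +>\<^bsub>free_alg n\<^esub> F a) A = I +>\<^bsub>free_alg n\<^esub> (\<lambda>w. \<Sum>a\<in>A. F a w)"
proof (induction A rule: finite_induct)
  case empty
  interpret Q: ring "free_alg n Quot I" by (rule quot_ring)
  show ?case by (simp add: coset_zero quot_zero)
next
  case (insert a A)
  interpret Q: ring "free_alg n Quot I" by (rule quot_ring)
  have "finsum (free_alg n Quot I) (\<lambda>a. I +>\<^bsub>free_alg n\<^esub> F a) (insert a A)
      = (I +>\<^bsub>free_alg n\<^esub> F a) \<oplus>\<^bsub>free_alg n Quot I\<^esub> finsum (free_alg n Quot I) (\<lambda>a. I +>\<^bsub>free_alg n\<^esub> F a) A"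
    using insert by (intro Q.finsum_insert) (auto intro: pi_carrier)
  also have "\<dots> = (I +>\<^bsub>free_alg n\<^esub> F a) \<oplus>\<^bsub>free_alg n Quot I\<^esub> (I +>\<^bsub>free_alg n\<^esub> (\<lambda>w. \<Sum>a\<in>A. F a w))"
    using insert by simp
  also have "\<dots> = I +>\<^bsub>free_alg n\<^esub> (\<lambda>w. F a w + (\<Sum>a\<in>A. F a w))"
    using insert by (intro pi_add[symmetric]) (auto intro: carrier_sum')
  finally show ?case using insert by simp
qed

lemma pi_add_pow: "p \<in> carrier (free_alg n) \<Longrightarrow>
  add_pow (free_alg n Quot I) (k::nat) (I +>\<^bsub>free_alg n\<^esub> p) = I +>\<^bsub>free_alg n\<^esub> (\<lambda>w. of_nat k * p w)"
proof (induction k)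
  case 0 then show ?case by (simp add: add_pow_def coset_zero quot_zero)
next
  case (Suc k)
  have "add_pow (free_alg n Quot I) (Suc k) (I +>\<^bsub>free_alg n\<^esub> p)
     = add_pow (free_alg n Quot I) k (I +>\<^bsub>free_alg n\<^esub> p) \<oplus>\<^bsub>free_alg n Quot I\<^esub> (I +>\<^bsub>free_alg n\<^esub> p)"
    by (simp add: add_pow_def)
  also have "\<dots> = I +>\<^bsub>free_alg n\<^esub> (\<lambda>w. of_nat k * p w + p w)"
    using Suc by (simp add: pi_add[symmetric] carrier_scale)
  finally show ?case by (simp add: algebra_simps)
qed

end


abbreviation piB :: "(nat list \<Rightarrow> 'k::field) \<Rightarrow> (nat list \<Rightarrow> 'k) set" where
  "piB p \<equiv> idealB +>\<^bsub>free_alg 6\<^esub> p"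

lemma B_alg_eq: "B_alg = free_alg 6 Quot idealB" by (simp add: B_alg_def)

lemma ringB: "ring (B_alg :: ((nat list \<Rightarrow> 'k::field) set) ring)"
  unfolding B_alg_def by (rule quot_ring[OF idealB_ideal])

lemma piB_carrier: "p \<in> carrier (free_alg 6) \<Longrightarrow> piB p \<in> carrier (B_alg :: ((nat list \<Rightarrow> 'k::field) set) ring)"
  unfolding B_alg_def by (rule pi_carrier[OF idealB_ideal])

lemma carrierB: "C \<in> carrier (B_alg :: ((nat list \<Rightarrow> 'k::field) set) ring) \<Longrightarrow> \<exists>p\<in>carrier (free_alg 6). C = piB p"
  unfolding B_alg_def carrier_quot by blast

lemma piB_eq: "p \<in> carrier (free_alg 6) \<Longrightarrow> q \<in> carrier (free_alg 6) \<Longrightarrow>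
   (piB p = piB q) \<longleftrightarrow> (\<lambda>w. p w - q w) \<in> (idealB :: (nat list \<Rightarrow> 'k::field) set)"
  by (rule coset_eq[OF idealB_ideal])

lemma zeroB: "\<zero>\<^bsub>B_alg\<^esub> = (idealB :: (nat list \<Rightarrow> 'k::field) set)"
  unfolding B_alg_def by (rule quot_zero[OF idealB_ideal])

lemma piB_zero: "piB (\<lambda>w. 0) = (idealB :: (nat list \<Rightarrow> 'k::field) set)"
  by (rule coset_zero[OF idealB_ideal])

lemma piB_is_zero: "p \<in> carrier (free_alg 6) \<Longrightarrow> (piB p = \<zero>\<^bsub>B_alg\<^esub>) \<longleftrightarrow> p \<in> (idealB :: (nat list \<Rightarrow> 'k::field) set)"
  unfolding zeroB by (rule coset_is_zero[OF idealB_ideal])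

lemma piB_add: "p \<in> carrier (free_alg 6) \<Longrightarrow> q \<in> carrier (free_alg 6) \<Longrightarrow>
   piB (\<lambda>w. p w + q w) = piB p \<oplus>\<^bsub>B_alg\<^esub> piB (q :: nat list \<Rightarrow> 'k::field)"
  unfolding B_alg_def by (rule pi_add[OF idealB_ideal])

lemma piB_mult: "p \<in> carrier (free_alg 6) \<Longrightarrow> q \<in> carrier (free_alg 6) \<Longrightarrow>
   piB (fa_mult p q) = piB p \<otimes>\<^bsub>B_alg\<^esub> piB (q :: nat list \<Rightarrow> 'k::field)"
  unfolding B_alg_def by (rule pi_mult[OF idealB_ideal])

lemma piB_one: "piB (mon []) = \<one>\<^bsub>B_alg\<^esub>"
  unfolding B_alg_def by (rule pi_one[OF idealB_ideal])

lemma piB_some: "C \<in> carrier (B_alg :: ((nat list \<Rightarrow> 'k::field) set) ring) \<Longrightarrow>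
   (SOME p. p \<in> C) \<in> carrier (free_alg 6) \<and> piB (SOME p. p \<in> C) = C"
  unfolding B_alg_def using coset_some[OF idealB_ideal] by blast

lemma deltaB_pi: "q \<in> carrier (free_alg 6) \<Longrightarrow> delta_B (piB q) = piB (delta (q :: nat list \<Rightarrow> 'k::field))"
proof -
  assume q: "q \<in> carrier (free_alg 6)"
  define p where "p = (SOME p. p \<in> piB q)"
  have pc: "p \<in> carrier (free_alg 6)" and pe: "piB p = piB q"
    using piB_some[OF piB_carrier[OF q]] unfolding p_def by auto
  have d: "(\<lambda>w. p w - q w) \<in> idealB" using pe piB_eq[OF pc q] by simp
  have "delta (\<lambda>w. p w - q w) = (\<lambda>w. delta p w - delta q w)"
    unfolding delta_def by (rule der_ext_diff) (use pc q carrier_fsupp in auto)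
  then have "(\<lambda>w. delta p w - delta q w) \<in> idealB" using delta_idealB[OF d] by simp
  then have "piB (delta p) = piB (delta q)"
    using piB_eq[OF delta_carrier[OF pc] delta_carrier[OF q]] by simp
  then show ?thesis unfolding delta_B_def induced_map_def p_def by simp
qed

lemma deltaB_pow_pi: "q \<in> carrier (free_alg 6) \<Longrightarrow> (delta_B ^^ k) (piB q) = piB ((delta ^^ k) (q :: nat list \<Rightarrow> 'k::field))"
  by (induction k) (simp_all add: deltaB_pi delta_pow_carrier)

lemma delta_pow_zero: "(delta ^^ k) (\<lambda>w. 0) = (\<lambda>w. 0 :: 'k::field)"
  by (induction k) (simp_all add: delta_zero)

lemma addpowB: "p \<in> carrier (free_alg 6) \<Longrightarrow>
  add_pow B_alg (k::nat) (piB p) = piB (\<lambda>w. of_nat k * (p w :: 'k::field))"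
  unfolding B_alg_def by (rule pi_add_pow[OF idealB_ideal])

lemma finsumB: "finite A \<Longrightarrow> (\<forall>a\<in>A. F a \<in> carrier (free_alg 6)) \<Longrightarrow>
  finsum B_alg (\<lambda>a. piB (F a)) A = piB (\<lambda>w. \<Sum>a\<in>A. (F a w :: 'k::field))"
  unfolding B_alg_def by (rule pi_finsum[OF idealB_ideal])

lemma fa_scalar_delta: "delta (fa_scalar c) = (\<lambda>w. 0 :: 'k::field)"
  unfolding fa_scalar_mon delta_def der_ext_scale by (simp add: der_ext_mon der_word_Nil)

lemma k_derivation: "is_k_derivation (B_alg :: ((nat list \<Rightarrow> 'k::field) set) ring) B_emb delta_B"
  unfolding is_k_derivation_def
proof (intro conjI ballI allI)
  show "delta_B \<in> carrier (B_alg :: ((nat list \<Rightarrow> 'k::field) set) ring) \<rightarrow> carrier B_alg"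
  proof
    fix C :: "(nat list \<Rightarrow> 'k) set" assume "C \<in> carrier B_alg"
    then obtain p where p: "p \<in> carrier (free_alg 6)" "C = piB p" using carrierB by blast
    show "delta_B C \<in> carrier B_alg" unfolding p(2) deltaB_pi[OF p(1)] by (rule piB_carrier[OF delta_carrier[OF p(1)]])
  qed
next
  fix C D :: "(nat list \<Rightarrow> 'k) set" assume C: "C \<in> carrier B_alg" and D: "D \<in> carrier B_alg"
  obtain p where p: "p \<in> carrier (free_alg 6)" "C = piB p" using carrierB[OF C] by blast
  obtain q where q: "q \<in> carrier (free_alg 6)" "D = piB q" using carrierB[OF D] by blast
  have fp: "fsupp p" "fsupp q" using p q carrier_fsupp by auto
  show "delta_B (C \<oplus>\<^bsub>B_alg\<^esub> D) = delta_B C \<oplus>\<^bsub>B_alg\<^esub> delta_B D"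
  proof -
    have e: "delta (\<lambda>w. p w + q w) = (\<lambda>w. delta p w + delta q w)"
      unfolding delta_def by (rule der_ext_add[OF fp])
    show ?thesis
      unfolding p(2) q(2) piB_add[OF p(1) q(1), symmetric] deltaB_pi[OF fa_add_closed[OF p(1) q(1)]]
        deltaB_pi[OF p(1)] deltaB_pi[OF q(1)] e
      by (rule piB_add[OF delta_carrier[OF p(1)] delta_carrier[OF q(1)]])
  qed
  show "delta_B (C \<otimes>\<^bsub>B_alg\<^esub> D) = delta_B C \<otimes>\<^bsub>B_alg\<^esub> D \<oplus>\<^bsub>B_alg\<^esub> C \<otimes>\<^bsub>B_alg\<^esub> delta_B D"
  proof -
    have "delta (fa_mult p q) = (\<lambda>w. fa_mult (delta p) q w + fa_mult p (delta q) w)"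
      unfolding delta_def by (rule der_ext_mult[OF fp])
    then show ?thesis
      unfolding p(2) q(2) piB_mult[OF p(1) q(1), symmetric]
      by (simp add: deltaB_pi fa_mult_closed p(1) q(1) delta_carrier piB_mult[symmetric] piB_add[symmetric])
  qed
next
  fix c :: 'k and C :: "(nat list \<Rightarrow> 'k) set" assume C: "C \<in> carrier B_alg"
  obtain p where p: "p \<in> carrier (free_alg 6)" "C = piB p" using carrierB[OF C] by blast
  have sc: "fa_scalar c \<in> carrier (free_alg 6 :: (nat list \<Rightarrow> 'k) ring)" by (rule fa_scalar_carrier)
  have "delta (fa_mult (fa_scalar c) p) = (\<lambda>w. fa_mult (delta (fa_scalar c)) p w + fa_mult (fa_scalar c) (delta p) w)"
    unfolding delta_def by (rule der_ext_mult) (use p carrier_fsupp sc in auto)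
  also have "\<dots> = fa_mult (fa_scalar c) (delta p)"
    by (simp add: fa_scalar_delta fa_mult_zeroL)
  finally have e: "delta (fa_mult (fa_scalar c) p) = fa_mult (fa_scalar c) (delta p)" .
  show "delta_B (B_emb c \<otimes>\<^bsub>B_alg\<^esub> C) = B_emb c \<otimes>\<^bsub>B_alg\<^esub> delta_B C"
    unfolding B_emb_def p(2) piB_mult[OF sc p(1), symmetric]
    by (simp add: deltaB_pi fa_mult_closed[OF sc p(1)] p(1) e piB_mult[OF sc delta_carrier[OF p(1)]])
qed


lemma delta_pow_idealB: "p \<in> idealB \<Longrightarrow> (delta ^^ k) p \<in> (idealB :: (nat list \<Rightarrow> 'k::field) set)"
  by (induction k) (auto intro: delta_idealB)

lemma sum_if_eq: "(\<Sum>j\<le>(M::nat). if l + j = n then X j else 0) = (if l \<le> n \<and> n - l \<le> M then X (n - l) else (0::'a::comm_monoid_add))"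
proof -
  have "(\<Sum>j\<le>M. if l + j = n then X j else 0) = (\<Sum>j\<le>M. if j = n - l \<and> l \<le> n then X j else 0)"
    by (rule sum.cong) auto
  also have "\<dots> = (if l \<le> n \<and> n - l \<le> M then X (n - l) else 0)"
    by (cases "l \<le> n") (simp_all add: sum.delta')
  finally show ?thesis .
qed

lemma inner_formula:
  assumes h: "goodV h" and g: "goodV (g :: 'k::field V)" and bg: "bnd M g"
  shows "(\<Sum>j\<le>M. \<Sum>l\<le>i. (if l + j = n then fa_mult (h i) (\<lambda>w. of_nat (i choose l) * (delta ^^ (i - l)) (g j) w) w else 0))
     = fa_mult (h i) (Xp i g n) w"
proof -
  have "(\<Sum>j\<le>M. \<Sum>l\<le>i. (if l + j = n then fa_mult (h i) (\<lambda>w. of_nat (i choose l) * (delta ^^ (i - l)) (g j) w) w else 0))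
      = (\<Sum>l\<le>i. \<Sum>j\<le>M. (if l + j = n then of_nat (i choose l) * fa_mult (h i) ((delta ^^ (i - l)) (g j)) w else 0))"
  proof -
    have sc: "fa_mult (h i) (\<lambda>w. of_nat C * F w) w = of_nat C * fa_mult (h i) F w" for C and F :: "nat list \<Rightarrow> 'k"
      using fa_mult_scaleR[of "h i" "of_nat C" F] by (simp add: fun_eq_iff)
    show ?thesis by (subst sum.swap) (simp only: sc)
  qed
  also have "\<dots> = (\<Sum>l\<le>i. if l \<le> n \<and> n - l \<le> M then of_nat (i choose l) * fa_mult (h i) ((delta ^^ (i - l)) (g (n - l))) w else 0)"
    by (simp only: sum_if_eq)
  also have "\<dots> = (\<Sum>l\<le>i. (if l \<le> n then of_nat (i choose l) else 0) * fa_mult (h i) ((delta ^^ (i - l)) (g (n - l))) w)"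
  proof (rule sum.cong[OF refl])
    fix l
    show "(if l \<le> n \<and> n - l \<le> M then of_nat (i choose l) * fa_mult (h i) ((delta ^^ (i - l)) (g (n - l))) w else 0)
      = (if l \<le> n then of_nat (i choose l) else 0) * fa_mult (h i) ((delta ^^ (i - l)) (g (n - l))) w"
      using bg by (auto simp: delta_pow_zero fa_mult_zeroR not_le)
  qed
  also have "\<dots> = fa_mult (h i) (Xp i g n) w"
    unfolding Xp_formula[OF g] by (simp add: fa_mult_sumR)
  finally show ?thesis .
qed

lemma ore_mult_def: "mult (ore_ext R d) f g n = (\<Oplus>\<^bsub>R\<^esub> i\<in>{i. f i \<noteq> \<zero>\<^bsub>R\<^esub>}. \<Oplus>\<^bsub>R\<^esub> j\<in>{j. g j \<noteq> \<zero>\<^bsub>R\<^esub>}. \<Oplus>\<^bsub>R\<^esub> l\<in>{..i}.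
               (if l + j = n then f i \<otimes>\<^bsub>R\<^esub> add_pow R (i choose l) ((d ^^ (i - l)) (g j)) else \<zero>\<^bsub>R\<^esub>))"
  by (simp add: ore_ext_def)

lemma OM:
  assumes h: "goodV h" and bh: "bnd N h" and g: "goodV (g :: 'k::field V)" and bg: "bnd M g"
  shows "piB (Mb N h g n) = mult (ore_ext B_alg delta_B) (\<lambda>n. piB (h n)) (\<lambda>n. piB (g n)) n"
proof -
  interpret B: ring "B_alg :: ((nat list \<Rightarrow> 'k) set) ring" by (rule ringB)
  note IB = idealB_ideal[where 'k='k]
  have hc: "h i \<in> carrier (free_alg 6)" for i by (rule goodV_carrier[OF h])
  have gc: "g j \<in> carrier (free_alg 6)" for j by (rule goodV_carrier[OF g])
  define T where "T = (\<lambda>i j l. if l + j = n then fa_mult (h i) (\<lambda>w. of_nat (i choose l) * (delta ^^ (i - l)) (g j) w) else (\<lambda>w. 0 :: 'k))"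
  have Tc: "T i j l \<in> carrier (free_alg 6)" for i j l
    unfolding T_def by (auto intro!: fa_mult_closed hc carrier_scale delta_pow_carrier gc carrier_zero)
  let ?t = "\<lambda>i j l. (if l + j = n then piB (h i) \<otimes>\<^bsub>B_alg\<^esub> add_pow B_alg (i choose l) ((delta_B ^^ (i - l)) (piB (g j))) else \<zero>\<^bsub>B_alg\<^esub>)"
  have tT: "?t i j l = piB (T i j l)" for i j l
  proof (cases "l + j = n")
    case True
    then show ?thesis unfolding T_def
      by (simp add: deltaB_pow_pi[OF gc] addpowB[OF delta_pow_carrier[OF gc]]
          piB_mult[OF hc carrier_scale[OF delta_pow_carrier[OF gc]]])
  next
    case False
    then show ?thesis unfolding T_def by (simp add: zeroB piB_zero)
  qed
  define W where "W = (\<lambda>i j. piB (\<lambda>w. \<Sum>l\<le>i. T i j l w))"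
  have Wc: "W i j \<in> carrier B_alg" for i j unfolding W_def
    by (rule piB_carrier, rule carrier_sum') (auto simp: Tc)
  have tW: "(\<Oplus>\<^bsub>B_alg\<^esub> l\<in>{..i}. ?t i j l) = W i j" for i j
    unfolding tT W_def by (rule finsumB) (auto simp: Tc)
  define Z where "Z = (\<lambda>i. piB (\<lambda>w. \<Sum>j\<le>M. \<Sum>l\<le>i. T i j l w))"
  have Zc: "Z i \<in> carrier B_alg" for i unfolding Z_def
    by (rule piB_carrier, rule carrier_sum', simp, rule ballI, rule carrier_sum') (auto simp: Tc)
  have Sj: "{j. piB (g j) \<noteq> \<zero>\<^bsub>B_alg\<^esub>} \<subseteq> {..M}"
  proof
    fix j assume "j \<in> {j. piB (g j) \<noteq> \<zero>\<^bsub>B_alg\<^esub>}"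
    then have "g j \<noteq> (\<lambda>w. 0)" by (auto simp: zeroB piB_zero)
    then show "j \<in> {..M}" using bg by (auto simp: not_le[symmetric])
  qed
  have Si: "{i. piB (h i) \<noteq> \<zero>\<^bsub>B_alg\<^esub>} \<subseteq> {..N}"
  proof
    fix i assume "i \<in> {i. piB (h i) \<noteq> \<zero>\<^bsub>B_alg\<^esub>}"
    then have "h i \<noteq> (\<lambda>w. 0)" by (auto simp: zeroB piB_zero)
    then show "i \<in> {..N}" using bh by (auto simp: not_le[symmetric])
  qed
  have inner: "(\<Oplus>\<^bsub>B_alg\<^esub> j\<in>{j. piB (g j) \<noteq> \<zero>\<^bsub>B_alg\<^esub>}. \<Oplus>\<^bsub>B_alg\<^esub> l\<in>{..i}. ?t i j l) = Z i" for i
  proof -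
    have "(\<Oplus>\<^bsub>B_alg\<^esub> j\<in>{j. piB (g j) \<noteq> \<zero>\<^bsub>B_alg\<^esub>}. \<Oplus>\<^bsub>B_alg\<^esub> l\<in>{..i}. ?t i j l)
        = (\<Oplus>\<^bsub>B_alg\<^esub> j\<in>{j. piB (g j) \<noteq> \<zero>\<^bsub>B_alg\<^esub>}. W i j)"
      by (simp add: tW)
    also have "\<dots> = (\<Oplus>\<^bsub>B_alg\<^esub> j\<in>{..M}. W i j)"
    proof (rule B.add.finprod_mono_neutral_cong_left)
      show "finite {..M}" by simp
      show "{j. piB (g j) \<noteq> \<zero>\<^bsub>B_alg\<^esub>} \<subseteq> {..M}" by (rule Sj)
      show "W i \<in> {..M} \<rightarrow> carrier B_alg" using Wc by auto
      show "W i j = W i j" for j by simp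
      show "W i j = \<zero>\<^bsub>B_alg\<^esub>" if "j \<in> {..M} - {j. piB (g j) \<noteq> \<zero>\<^bsub>B_alg\<^esub>}" for j
      proof -
        have gj: "g j \<in> idealB" using that piB_is_zero[OF gc] by auto
        have "T i j l \<in> idealB" for l
          unfolding T_def using I_multL[OF IB I_scale[OF IB delta_pow_idealB[OF gj]] hc] I_zero[OF IB] by auto
        then have "(\<lambda>w. \<Sum>l\<le>i. 1 * T i j l w) \<in> idealB" by (intro I_sum[OF IB]) auto
        then show ?thesis unfolding W_def using piB_is_zero[OF carrier_sum'[of "{..i}" "T i j"]] Tc by auto
      qed
    qed
    also have "\<dots> = Z i" unfolding W_def Z_def
      by (rule finsumB) (auto intro!: carrier_sum' Tc)
    finally show ?thesis .
  qed
  have "mult (ore_ext B_alg delta_B) (\<lambda>n. piB (h n)) (\<lambda>n. piB (g n)) n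
      = (\<Oplus>\<^bsub>B_alg\<^esub> i\<in>{i. piB (h i) \<noteq> \<zero>\<^bsub>B_alg\<^esub>}. Z i)"
    unfolding ore_mult_def by (simp add: inner)
  also have "\<dots> = (\<Oplus>\<^bsub>B_alg\<^esub> i\<in>{..N}. Z i)"
  proof (rule B.add.finprod_mono_neutral_cong_left)
    show "finite {..N}" by simp
    show "{i. piB (h i) \<noteq> \<zero>\<^bsub>B_alg\<^esub>} \<subseteq> {..N}" by (rule Si)
    show "Z \<in> {..N} \<rightarrow> carrier B_alg" using Zc by auto
    show "Z i = Z i" for i by simp
    show "Z i = \<zero>\<^bsub>B_alg\<^esub>" if "i \<in> {..N} - {i. piB (h i) \<noteq> \<zero>\<^bsub>B_alg\<^esub>}" for i
    proof -
      have hi: "h i \<in> idealB" using that piB_is_zero[OF hc] by auto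
      have "T i j l \<in> idealB" for j l
        unfolding T_def using I_multR[OF IB hi carrier_scale[OF delta_pow_carrier[OF gc]]] I_zero[OF IB] by auto
      then have "(\<lambda>w. \<Sum>j\<le>M. 1 * (\<Sum>l\<le>i. T i j l w)) \<in> idealB"
        by (intro I_sum[OF IB]) (auto intro: I_sum[OF IB, of _ _ "\<lambda>_. 1", simplified])
      moreover have "(\<lambda>w. \<Sum>j\<le>M. \<Sum>l\<le>i. T i j l w) \<in> carrier (free_alg 6)"
        by (rule carrier_sum', simp, rule ballI, rule carrier_sum') (auto simp: Tc)
      ultimately show ?thesis unfolding Z_def using piB_is_zero by auto
    qed
  qed
  also have "\<dots> = piB (\<lambda>w. \<Sum>i\<le>N. \<Sum>j\<le>M. \<Sum>l\<le>i. T i j l w)"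
    unfolding Z_def
    by (rule finsumB, simp, rule ballI, rule carrier_sum', simp, rule ballI, rule carrier_sum') (auto simp: Tc)
  also have "(\<lambda>w. \<Sum>i\<le>N. \<Sum>j\<le>M. \<Sum>l\<le>i. T i j l w) = Mb N h g n"
    unfolding Mb_def T_def
    by (intro ext sum.cong refl) (simp add: if_distrib[of "\<lambda>f. f _"] inner_formula[OF h g bg, symmetric] cong: if_cong)
  finally show ?thesis by simp
qed


abbreviation piA :: "(nat list \<Rightarrow> 'k::field) \<Rightarrow> (nat list \<Rightarrow> 'k) set" where
  "piA p \<equiv> idealA +>\<^bsub>free_alg 7\<^esub> p"

definition phi :: "(nat list \<Rightarrow> 'k::field) set \<Rightarrow> nat \<Rightarrow> (nat list \<Rightarrow> 'k) set" where
  "phi C = (\<lambda>n. piB (rho (SOME p. p \<in> C) e0 n))"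

lemma carrierA: "C \<in> carrier (A_alg :: ((nat list \<Rightarrow> 'k::field) set) ring) \<Longrightarrow> \<exists>p\<in>carrier (free_alg 7). C = piA p"
  unfolding A_alg_def carrier_quot by blast

lemma piA_carrier: "p \<in> carrier (free_alg 7) \<Longrightarrow> piA p \<in> carrier (A_alg :: ((nat list \<Rightarrow> 'k::field) set) ring)"
  unfolding A_alg_def by (rule pi_carrier[OF idealA_ideal])

lemma rho_e0_carrier: "p \<in> carrier (free_alg 7) \<Longrightarrow> rho p e0 n \<in> carrier (free_alg 6 :: (nat list \<Rightarrow> 'k::field) ring)"
  by (rule goodV_carrier[OF goodV_rho[OF _ goodV_e0]])

lemma phi_pi:
  assumes p: "p \<in> carrier (free_alg 7)"
  shows "phi (piA p) = (\<lambda>n. piB (rho p e0 n :: nat list \<Rightarrow> 'k::field))"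
proof -
  define p' where "p' = (SOME x. x \<in> piA p)"
  have pc: "p' \<in> carrier (free_alg 7)" and pe: "piA p' = piA p"
    using coset_some[OF idealA_ideal pi_carrier[OF idealA_ideal p]] unfolding p'_def by auto
  have d: "(\<lambda>w. p' w - p w) \<in> idealA" using pe coset_eq[OF idealA_ideal pc p] by simp
  have K: "rho (\<lambda>w. p' w - p w) e0 n \<in> idealB" for n
    using subsetD[OF idealA_Kset d] goodV_e0 unfolding Kset_def by auto
  have r: "rho (\<lambda>w. p' w - p w) e0 = (\<lambda>n w. rho p' e0 n w - rho p e0 n w)"
    by (rule rho_diff) (use pc p carrier_fsupp in auto)
  have "piB (rho p' e0 n) = piB (rho p e0 n)" for n
    using K[of n] piB_eq[OF rho_e0_carrier[OF pc] rho_e0_carrier[OF p]] unfolding r by simp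
  then show ?thesis unfolding phi_def p'_def[symmetric] by simp
qed

lemma phi_carrier:
  assumes p: "p \<in> carrier (free_alg 7)"
  shows "phi (piA p) \<in> carrier (ore_ext B_alg delta_B :: (nat \<Rightarrow> (nat list \<Rightarrow> 'k::field) set) ring)"
proof -
  obtain N where N: "bnd N (rho p (e0 :: 'k V))" using goodV_bnd[OF goodV_rho[OF p goodV_e0]] by blast
  have "{i. piB (rho p e0 i) \<noteq> \<zero>\<^bsub>B_alg\<^esub>} \<subseteq> {..N}"
  proof
    fix i assume "i \<in> {i. piB (rho p (e0 :: 'k V) i) \<noteq> \<zero>\<^bsub>B_alg\<^esub>}"
    then have "rho p (e0 :: 'k V) i \<noteq> (\<lambda>w. 0)" by (auto simp: zeroB piB_zero)
    then show "i \<in> {..N}" using N by (auto simp: not_le[symmetric])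
  qed
  then have "finite {i. piB (rho p (e0 :: 'k V) i) \<noteq> \<zero>\<^bsub>B_alg\<^esub>}" by (rule finite_subset) simp
  then show ?thesis unfolding phi_pi[OF p]
    by (simp add: ore_ext_def piB_carrier rho_e0_carrier[OF p])
qed

theorem main_iso:
  "phi \<in> ring_iso (A_alg :: ((nat list \<Rightarrow> 'k::field) set) ring) (ore_ext B_alg delta_B)"
proof -
  note IA = idealA_ideal[where 'k='k]
  have hom: "phi \<in> ring_hom (A_alg :: ((nat list \<Rightarrow> 'k::field) set) ring) (ore_ext B_alg delta_B)"
  proof (rule ring_hom_memI)
    fix C :: "(nat list \<Rightarrow> 'k) set" assume "C \<in> carrier A_alg"
    then obtain p where p: "p \<in> carrier (free_alg 7)" "C = piA p" using carrierA by blast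
    show "phi C \<in> carrier (ore_ext B_alg delta_B)" unfolding p(2) by (rule phi_carrier[OF p(1)])
  next
    fix C D :: "(nat list \<Rightarrow> 'k) set" assume C: "C \<in> carrier A_alg" and D: "D \<in> carrier A_alg"
    obtain p where p: "p \<in> carrier (free_alg 7)" "C = piA p" using carrierA[OF C] by blast
    obtain q where q: "q \<in> carrier (free_alg 7)" "D = piA q" using carrierA[OF D] by blast
    have CD: "C \<otimes>\<^bsub>A_alg\<^esub> D = piA (fa_mult p q)"
      unfolding p(2) q(2) A_alg_def by (rule pi_mult[OF IA p(1) q(1), symmetric])
    have gq: "goodV (rho q (e0::'k V))" by (rule goodV_rho[OF q(1) goodV_e0])
    obtain M where M: "bnd M (rho q (e0::'k V))" using goodV_bnd[OF gq] by blast
    obtain N where N: "bnd N (rho p (e0::'k V))" and NM: "rho p (rho q e0) = Mb N (rho p e0) (rho q e0)"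
      using rho_M[OF p(1) gq] by blast
    have "phi (C \<otimes>\<^bsub>A_alg\<^esub> D) = (\<lambda>n. piB (rho (fa_mult p q) e0 n))"
      unfolding CD by (rule phi_pi[OF fa_mult_closed[OF p(1) q(1)]])
    also have "\<dots> = (\<lambda>n. piB (Mb N (rho p e0) (rho q e0) n))"
      by (simp add: rho_mult[OF p(1) q(1) goodV_e0] NM)
    also have "\<dots> = mult (ore_ext B_alg delta_B) (\<lambda>n. piB (rho p e0 n)) (\<lambda>n. piB (rho q e0 n))"
      by (rule ext, rule OM[OF goodV_rho[OF p(1) goodV_e0] N gq M])
    also have "\<dots> = phi C \<otimes>\<^bsub>ore_ext B_alg delta_B\<^esub> phi D"
      by (simp add: p(2) q(2) phi_pi[OF p(1)] phi_pi[OF q(1)])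
    finally show "phi (C \<otimes>\<^bsub>A_alg\<^esub> D) = phi C \<otimes>\<^bsub>ore_ext B_alg delta_B\<^esub> phi D" .
  next
    fix C D :: "(nat list \<Rightarrow> 'k) set" assume C: "C \<in> carrier A_alg" and D: "D \<in> carrier A_alg"
    obtain p where p: "p \<in> carrier (free_alg 7)" "C = piA p" using carrierA[OF C] by blast
    obtain q where q: "q \<in> carrier (free_alg 7)" "D = piA q" using carrierA[OF D] by blast
    have CD: "C \<oplus>\<^bsub>A_alg\<^esub> D = piA (\<lambda>w. p w + q w)"
      unfolding p(2) q(2) A_alg_def by (rule pi_add[OF IA p(1) q(1), symmetric])
    have "phi (C \<oplus>\<^bsub>A_alg\<^esub> D) = (\<lambda>n. piB (rho (\<lambda>w. p w + q w) e0 n))"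
      unfolding CD by (rule phi_pi[OF fa_add_closed[OF p(1) q(1)]])
    also have "\<dots> = (\<lambda>n. piB (\<lambda>w. rho p e0 n w + rho q e0 n w))"
      using rho_add[OF carrier_fsupp[OF p(1)] carrier_fsupp[OF q(1)], of e0] by simp
    also have "\<dots> = (\<lambda>n. piB (rho p e0 n) \<oplus>\<^bsub>B_alg\<^esub> piB (rho q e0 n))"
      by (rule ext, rule piB_add[OF rho_e0_carrier[OF p(1)] rho_e0_carrier[OF q(1)]])
    also have "\<dots> = phi C \<oplus>\<^bsub>ore_ext B_alg delta_B\<^esub> phi D"
      by (simp add: p(2) q(2) phi_pi[OF p(1)] phi_pi[OF q(1)] ore_ext_def)
    finally show "phi (C \<oplus>\<^bsub>A_alg\<^esub> D) = phi C \<oplus>\<^bsub>ore_ext B_alg delta_B\<^esub> phi D" .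
  next
    have one: "\<one>\<^bsub>A_alg\<^esub> = piA (mon [] :: nat list \<Rightarrow> 'k)"
      unfolding A_alg_def by (rule pi_one[OF IA, symmetric])
    have mc: "mon [] \<in> carrier (free_alg 7 :: (nat list \<Rightarrow> 'k) ring)" by (rule mon_carrier) simp
    show "phi (\<one>\<^bsub>A_alg\<^esub> :: (nat list \<Rightarrow> 'k) set) = \<one>\<^bsub>ore_ext B_alg delta_B\<^esub>"
      unfolding one phi_pi[OF mc] rho_mon
      by (rule ext) (simp add: ore_ext_def e0_def piB_one piB_zero zeroB)
  qed
  have inj: "inj_on phi (carrier (A_alg :: ((nat list \<Rightarrow> 'k::field) set) ring))"
  proof (rule inj_onI)
    fix C D :: "(nat list \<Rightarrow> 'k) set" assume C: "C \<in> carrier A_alg" and D: "D \<in> carrier A_alg"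
      and eq: "phi C = phi D"
    obtain p where p: "p \<in> carrier (free_alg 7)" "C = piA p" using carrierA[OF C] by blast
    obtain q where q: "q \<in> carrier (free_alg 7)" "D = piA q" using carrierA[OF D] by blast
    define r where "r = (\<lambda>w. p w - q w)"
    have rc: "r \<in> carrier (free_alg 7)" unfolding r_def by (rule carrier_diff[OF p(1) q(1)])
    have rr: "rho r e0 = (\<lambda>n w. rho p e0 n w - rho q e0 n w)"
      unfolding r_def by (rule rho_diff) (use p q carrier_fsupp in auto)
    have hI: "rho r (e0::'k V) n \<in> idealB" for n
    proof -
      have "piB (rho p (e0::'k V) n) = piB (rho q e0 n)"
        using eq unfolding p(2) q(2) phi_pi[OF p(1)] phi_pi[OF q(1)] by (simp add: fun_eq_iff)
      then show ?thesis unfolding rr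
        using piB_eq[OF rho_e0_carrier[OF p(1)] rho_e0_carrier[OF q(1)]] by simp
    qed
    obtain N where N: "bnd N (rho r (e0::'k V))" using goodV_bnd[OF goodV_rho[OF rc goodV_e0]] by blast
    have X: "(\<lambda>w. r w - Nmap N (rho r e0) w) \<in> idealA" by (rule N2[OF rc N])
    have Y: "Nmap N (rho r (e0::'k V)) \<in> idealA"
    proof -
      have "(\<lambda>w. \<Sum>i\<le>N. 1 * fa_mult (rho r (e0::'k V) i) (x7p i) w) \<in> idealA"
        by (rule I_sum[OF IA], simp, rule ballI, rule I_multR[OF IA _ x7p_carrier])
           (use hI idealB_idealA in blast)
      then show ?thesis unfolding Nmap_def by simp
    qed
    have "(\<lambda>w. (r w - Nmap N (rho r e0) w) + Nmap N (rho r e0) w) \<in> idealA"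
      by (rule I_add[OF IA X Y])
    then have "r \<in> idealA" by simp
    then show "C = D" unfolding p(2) q(2) using coset_eq[OF IA p(1) q(1)] r_def by simp
  qed
  have surj: "phi ` carrier (A_alg :: ((nat list \<Rightarrow> 'k::field) set) ring) = carrier (ore_ext B_alg delta_B)"
  proof
    show "phi ` carrier (A_alg :: ((nat list \<Rightarrow> 'k::field) set) ring) \<subseteq> carrier (ore_ext B_alg delta_B)"
      using ring_hom_closed[OF hom] by auto
  next
    show "carrier (ore_ext B_alg delta_B) \<subseteq> phi ` carrier (A_alg :: ((nat list \<Rightarrow> 'k::field) set) ring)"
    proof
      fix f assume "f \<in> carrier (ore_ext B_alg (delta_B :: (nat list \<Rightarrow> 'k) set \<Rightarrow> _))"
      then have fc: "\<And>i. f i \<in> carrier B_alg" and ff: "finite {i. f i \<noteq> \<zero>\<^bsub>B_alg\<^esub>}"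
        by (auto simp: ore_ext_def)
      define h where "h = (\<lambda>i. if f i = \<zero>\<^bsub>B_alg\<^esub> then (\<lambda>w. 0) else (SOME p. p \<in> f i))"
      have hc: "h i \<in> carrier (free_alg 6 :: (nat list \<Rightarrow> 'k) ring)" for i
        unfolding h_def using piB_some[OF fc[of i]] carrier_zero by auto
      have hf: "piB (h i) = f i" for i
        unfolding h_def using piB_some[OF fc[of i]] by (auto simp: piB_zero zeroB)
      define N where "N = Max (insert 0 {i. f i \<noteq> \<zero>\<^bsub>B_alg\<^esub>})"
      have bN: "bnd N h"
      proof (intro allI impI)
        fix i assume "i > N"
        then have "f i = \<zero>\<^bsub>B_alg\<^esub>" unfolding N_def using ff
          by (metis (mono_tags, lifting) Max_ge finite_insert insertCI mem_Collect_eq not_le)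
        then show "h i = (\<lambda>w. 0)" unfolding h_def by simp
      qed
      have gh: "goodV h" unfolding goodV_def using hc bN by blast
      have Nc: "Nmap N h \<in> carrier (free_alg 7)" by (rule Nmap_carrier[OF gh])
      have "phi (piA (Nmap N h)) = f"
        unfolding phi_pi[OF Nc] rho_Nmap[OF gh bN] hf by simp
      moreover have "piA (Nmap N h) \<in> carrier A_alg" by (rule piA_carrier[OF Nc])
      ultimately show "f \<in> phi ` carrier A_alg" by blast
    qed
  qed
  show ?thesis unfolding ring_iso_def using hom inj surj by (auto simp: bij_betw_def)
qed

lemma phi_emb: "phi (A_emb c) = ore_emb B_alg B_emb (c::'k::field)"
proof -
  have sc: "fa_scalar c \<in> carrier (free_alg 7 :: (nat list \<Rightarrow> 'k) ring)" by (rule fa_scalar_carrier)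
  have sc6: "fa_scalar c \<in> carrier (free_alg 6 :: (nat list \<Rightarrow> 'k) ring)" by (rule fa_scalar_carrier)
  have "rho (fa_scalar c) (e0::'k V) = (\<lambda>n. fa_mult (fa_scalar c) (e0 n))" by (rule rho6[OF sc6])
  then show ?thesis
    unfolding A_emb_def phi_pi[OF sc]
    by (intro ext) (auto simp: ore_emb_def B_emb_def e0_def fa_scalar_mult fa_mult_zeroR piB_zero zeroB
        fa_scalar_mon[symmetric])
qed

theorem proposition4p8:
  shows "(\<forall>p\<in>(idealB :: (nat list \<Rightarrow> 'k::field) set). delta p \<in> idealB)
    \<and> is_k_derivation (B_alg :: ((nat list \<Rightarrow> 'k::field) set) ring) B_emb delta_B
    \<and> (\<exists>\<phi>. \<phi> \<in> ring_iso (A_alg :: ((nat list \<Rightarrow> 'k::field) set) ring) (ore_ext B_alg delta_B)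
          \<and> (\<forall>c::'k. \<phi> (A_emb c) = ore_emb B_alg B_emb c))"
  using delta_idealB k_derivation main_iso phi_emb by blast


end
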